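(* Every orthogonally convex polygon $P$ has exactly $4$ knobs; more precisely, $P$ has exactly one left knob, exactly one right knob, exactly one top knob and exactly one bottom knob.
   Context: An orthogonal polygon $P$ is orthogonally convex if it is a simply connected polygon with all edges parallel to the $x$- or $y$-axis and the intersection of every line parallel to the $x$-axis or $y$-axis with $P$ is a single (possibly empty) line segment. A vertex is convex if its interior angle is $90^\circ$. A knob is an edge $(v_i,v_{i+1})$ both of whose endpoints are convex. A vertical knob is a left knob if points immediately to its left are outside $P$, and a right knob otherwise; a horizontal knob is a top knob if points immediately above it are outside $P$, and a bottom knob otherwise. *)

theory Defs
  imports "HOL-Analysis.Analysis"
begin

type_synonym pt = "real \<times> real"

definition vtx :: "pt list \<Rightarrow> nat \<Rightarrow> pt" where
  "vtx vs i = vs ! (i mod length vs)"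

definition edge_set :: "pt list \<Rightarrow> nat \<Rightarrow> pt set" where
  "edge_set vs i = closed_segment (vtx vs i) (vtx vs (Suc i))"

definition poly_boundary :: "pt list \<Rightarrow> pt set" where
  "poly_boundary vs = (\<Union>i<length vs. edge_set vs i)"

definition poly_region :: "pt list \<Rightarrow> pt set" where
  "poly_region vs = poly_boundary vs \<union> inside (poly_boundary vs)"

text \<open>Simple orthogonal polygon: distinct vertices, every edge axis-parallel,
  horizontal and vertical edges alternate (every vertex is a genuine corner),
  and edges meet only at common endpoints of consecutive edges.\<close>
definition orthogonal_polygon :: "pt list \<Rightarrow> bool" where
  "orthogonal_polygon vs \<longleftrightarrow>
     4 \<le> length vs \<and> distinct vs \<and>
     (\<forall>i<length vs. fst (vtx vs i) = fst (vtx vs (Suc i)) \<or> snd (vtx vs i) = snd (vtx vs (Suc i))) \<and>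
     (\<forall>i<length vs. (snd (vtx vs i) = snd (vtx vs (Suc i))) \<longleftrightarrow>
                       (fst (vtx vs (Suc i)) = fst (vtx vs (Suc (Suc i))))) \<and>
     (\<forall>i<length vs. \<forall>j<length vs. i \<noteq> j \<longrightarrow>
        edge_set vs i \<inter> edge_set vs j =
          (if Suc i mod length vs = j then {vtx vs (Suc i)}
           else if Suc j mod length vs = i then {vtx vs i} else {}))"

definition single_segment :: "pt set \<Rightarrow> bool" where
  "single_segment S \<longleftrightarrow> S = {} \<or> (\<exists>a b. S = closed_segment a b)"

definition orth_convex_polygon :: "pt list \<Rightarrow> bool" where
  "orth_convex_polygon vs \<longleftrightarrow>
     orthogonal_polygon vs \<and> simply_connected (poly_region vs) \<and>
     (\<forall>c. single_segment ({p. snd p = c} \<inter> poly_region vs)) \<and>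
     (\<forall>c. single_segment ({p. fst p = c} \<inter> poly_region vs))"

text \<open>Vertex i is convex iff its interior angle is 90 degrees: the two incident
  edges are perpendicular and near v_i the polygon coincides with the
  quarter-plane spanned by the two incident edges.\<close>
definition convex_vertex :: "pt list \<Rightarrow> nat \<Rightarrow> bool" where
  "convex_vertex vs i \<longleftrightarrow>
     (let v = vtx vs i; u = vtx vs (i + length vs - 1); w = vtx vs (Suc i) in
       (u - v) \<bullet> (w - v) = 0 \<and>
       (\<exists>e>0. poly_region vs \<inter> ball v e =
           {v + s *\<^sub>R (u - v) + t *\<^sub>R (w - v) | s t. 0 \<le> s \<and> 0 \<le> t} \<inter> ball v e))"

definition knob :: "pt list \<Rightarrow> nat \<Rightarrow> bool" where
  "knob vs i \<longleftrightarrow> convex_vertex vs i \<and> convex_vertex vs (Suc i)"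

definition vertical_edge :: "pt list \<Rightarrow> nat \<Rightarrow> bool" where
  "vertical_edge vs i \<longleftrightarrow> fst (vtx vs i) = fst (vtx vs (Suc i))"

definition horizontal_edge :: "pt list \<Rightarrow> nat \<Rightarrow> bool" where
  "horizontal_edge vs i \<longleftrightarrow> snd (vtx vs i) = snd (vtx vs (Suc i))"

definition left_outside :: "pt list \<Rightarrow> nat \<Rightarrow> bool" where
  "left_outside vs i \<longleftrightarrow>
     (\<forall>p\<in>open_segment (vtx vs i) (vtx vs (Suc i)). \<exists>e>0. \<forall>t. 0 < t \<and> t < e \<longrightarrow>
        p - (t, 0) \<notin> poly_region vs)"

definition above_outside :: "pt list \<Rightarrow> nat \<Rightarrow> bool" where
  "above_outside vs i \<longleftrightarrow>
     (\<forall>p\<in>open_segment (vtx vs i) (vtx vs (Suc i)). \<exists>e>0. \<forall>t. 0 < t \<and> t < e \<longrightarrow>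
        p + (0, t) \<notin> poly_region vs)"

definition left_knob :: "pt list \<Rightarrow> nat \<Rightarrow> bool" where
  "left_knob vs i \<longleftrightarrow> knob vs i \<and> vertical_edge vs i \<and> left_outside vs i"

definition right_knob :: "pt list \<Rightarrow> nat \<Rightarrow> bool" where
  "right_knob vs i \<longleftrightarrow> knob vs i \<and> vertical_edge vs i \<and> \<not> left_outside vs i"

definition top_knob :: "pt list \<Rightarrow> nat \<Rightarrow> bool" where
  "top_knob vs i \<longleftrightarrow> knob vs i \<and> horizontal_edge vs i \<and> above_outside vs i"

definition bottom_knob :: "pt list \<Rightarrow> nat \<Rightarrow> bool" where
  "bottom_knob vs i \<longleftrightarrow> knob vs i \<and> horizontal_edge vs i \<and> \<not> above_outside vs i"

end

theory Submission
  imports Defs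
begin


lemma cseg_vert: "closed_segment (a::real, y1::real) (a, y2) = {p. fst p = a \<and> snd p \<in> closed_segment y1 y2}"
  by (auto simp: closed_segment_def algebra_simps) (metis add.commute)
lemma cseg_horiz: "closed_segment (x1::real, b::real) (x2, b) = {p. snd p = b \<and> fst p \<in> closed_segment x1 x2}"
  by (auto simp: closed_segment_def algebra_simps) (metis add.commute)
lemma oseg_vert: "open_segment (a::real, y1::real) (a, y2) = {p. fst p = a \<and> snd p \<in> open_segment y1 y2}"
  by (auto simp: open_segment_def cseg_vert)
lemma oseg_horiz: "open_segment (x1::real, b::real) (x2, b) = {p. snd p = b \<and> fst p \<in> open_segment x1 x2}"
  by (auto simp: open_segment_def cseg_horiz)

locale opoly =
  fixes vs :: "pt list"
  assumes op: "orthogonal_polygon vs"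
begin

abbreviation "pv i \<equiv> vtx vs i"
abbreviation "E i \<equiv> edge_set vs i"
abbreviation "BB \<equiv> poly_boundary vs"
abbreviation "RR \<equiv> poly_region vs"
abbreviation "INS \<equiv> inside BB"
abbreviation "OUT \<equiv> outside BB"

lemma n4: "4 \<le> length vs" using op by (simp add: orthogonal_polygon_def)
lemma npos: "0 < length vs" using n4 by (cases vs) auto
lemma dist: "distinct vs" using op by (simp add: orthogonal_polygon_def)

lemma pv_mod[simp]: "pv (i mod length vs) = pv i" by (simp add: vtx_def)
lemma pv_add[simp]: "pv (i + length vs) = pv i" by (simp add: vtx_def)
lemma pv_Suc_mod[simp]: "pv (Suc (i mod length vs)) = pv (Suc i)"
  by (simp add: vtx_def mod_Suc_eq)
lemma E_mod[simp]: "E (i mod length vs) = E i" by (simp add: edge_set_def)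
lemma E_def': "E i = closed_segment (pv i) (pv (Suc i))" by (simp add: edge_set_def)

lemma pv_eq: "pv i = pv j \<longleftrightarrow> i mod length vs = j mod length vs"
  using dist npos by (simp add: vtx_def nth_eq_iff_index_eq)

lemma Suc_mod_ne: "Suc i mod length vs \<noteq> i mod length vs"
proof -
  have "i mod length vs < length vs" using npos by simp
  then show ?thesis using n4 by (simp add: mod_Suc)
qed

lemma pv_Suc_ne: "pv (Suc i) \<noteq> pv i"
  using Suc_mod_ne pv_eq by blast

lemma VH: "vertical_edge vs i \<or> horizontal_edge vs i"
proof -
  have "i mod length vs < length vs" using npos by simp
  then have "fst (pv (i mod length vs)) = fst (pv (Suc (i mod length vs))) \<or> snd (pv (i mod length vs)) = snd (pv (Suc (i mod length vs)))"
    using op unfolding orthogonal_polygon_def by blast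
  then show ?thesis by (simp add: vertical_edge_def horizontal_edge_def)
qed

lemma not_VH: "\<not> (vertical_edge vs i \<and> horizontal_edge vs i)"
  using pv_Suc_ne[of i] by (auto simp: vertical_edge_def horizontal_edge_def prod_eq_iff)

lemma H_V_Suc: "horizontal_edge vs i \<longleftrightarrow> vertical_edge vs (Suc i)"
proof -
  have "i mod length vs < length vs" using npos by simp
  then have "(snd (pv (i mod length vs)) = snd (pv (Suc (i mod length vs)))) \<longleftrightarrow> (fst (pv (Suc (i mod length vs))) = fst (pv (Suc (Suc (i mod length vs)))))"
    using op unfolding orthogonal_polygon_def by blast
  moreover have "pv (Suc (Suc (i mod length vs))) = pv (Suc (Suc i))"
    unfolding vtx_def by (metis mod_Suc_eq)
  ultimately show ?thesis by (simp add: vertical_edge_def horizontal_edge_def)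
qed

lemma V_H_Suc: "vertical_edge vs i \<longleftrightarrow> horizontal_edge vs (Suc i)"
  using H_V_Suc[of i] VH[of i] not_VH[of i] VH[of "Suc i"] not_VH[of "Suc i"] by blast

lemma edge_int: "i mod length vs \<noteq> j mod length vs \<Longrightarrow> E i \<inter> E j =
   (if Suc i mod length vs = j mod length vs then {pv (Suc i)}
    else if Suc j mod length vs = i mod length vs then {pv i} else {})"
proof -
  assume ne: "i mod length vs \<noteq> j mod length vs"
  have "i mod length vs < length vs" "j mod length vs < length vs" using npos by simp_all
  then have "E (i mod length vs) \<inter> E (j mod length vs) =
          (if Suc (i mod length vs) mod length vs = j mod length vs then {pv (Suc (i mod length vs))}
           else if Suc (j mod length vs) mod length vs = i mod length vs then {pv (i mod length vs)} else {})"
    using op ne unfolding orthogonal_polygon_def by blast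
  then show ?thesis by (simp add: mod_Suc_eq)
qed

lemma BB_def': "BB = (\<Union>i<length vs. E i)" by (simp add: poly_boundary_def)
lemma E_sub_BB: "E i \<subseteq> BB"
proof -
  have "i mod length vs < length vs" using npos by simp
  then show ?thesis unfolding BB_def' by (metis E_mod UN_upper lessThan_iff)
qed
lemma pv_in_BB: "pv i \<in> BB" using E_sub_BB[of i] by (auto simp: E_def')
lemma compact_BB: "compact BB" unfolding BB_def' E_def' by (auto intro!: compact_UN)
lemma closed_BB: "closed BB" using compact_BB compact_imp_closed by blast
lemma RR_def': "RR = BB \<union> INS" by (simp add: poly_region_def)

end


primrec pchain :: "pt list \<Rightarrow> nat \<Rightarrow> (real \<Rightarrow> pt)" where
  "pchain vs 0 = linepath (vtx vs 0) (vtx vs 1)"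
| "pchain vs (Suc k) = pchain vs k +++ linepath (vtx vs (Suc k)) (vtx vs (Suc (Suc k)))"

lemma pchain_start[simp]: "pathstart (pchain vs k) = vtx vs 0"
  by (induction k) auto
lemma pchain_finish[simp]: "pathfinish (pchain vs k) = vtx vs (Suc k)"
  by (induction k) auto
lemma pchain_path: "path (pchain vs k)"
  by (induction k) auto
lemma pchain_image: "path_image (pchain vs k) = (\<Union>j\<le>k. edge_set vs j)"
proof (induction k)
  case 0 then show ?case by (simp add: edge_set_def)
next
  case (Suc k)
  then show ?case
    by (simp add: path_image_join edge_set_def atMost_Suc Un_commute)
qed

context opoly begin

lemma pchain_arc: "Suc k < length vs \<Longrightarrow> arc (pchain vs k)"
proof (induction k)
  case 0
  then show ?case using pv_Suc_ne[of 0] by simp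
next
  case (Suc k)
  have "arc (linepath (pv (Suc k)) (pv (Suc (Suc k))))"
    using pv_Suc_ne[of "Suc k"] by simp
  moreover have "path_image (pchain vs k) \<inter> path_image (linepath (pv (Suc k)) (pv (Suc (Suc k)))) \<subseteq> {pv (Suc k)}"
  proof -
    have "E j \<inter> E (Suc k) \<subseteq> {pv (Suc k)}" if "j \<le> k" for j
    proof -
      have jm: "j mod length vs = j" "Suc k mod length vs = Suc k" "Suc (Suc k) mod length vs = Suc (Suc k)"
        using Suc.prems that by auto
      then have "j mod length vs \<noteq> Suc k mod length vs" using that by simp
      from edge_int[OF this] show ?thesis using jm that by (auto split: if_splits simp: pv_eq)
    qed
    then show ?thesis by (auto simp: pchain_image E_def'[symmetric])
  qed
  ultimately show ?case using Suc by (auto intro!: arc_join)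
qed

definition "ploop = pchain vs (length vs - 2) +++ linepath (pv (length vs - 1)) (pv 0)"

lemma ploop_simple: "simple_path ploop"
  unfolding ploop_def
proof (rule simple_path_join_loop)
  show "arc (pchain vs (length vs - 2))" using n4 by (intro pchain_arc) simp
  have "pv (length vs - 1) \<noteq> pv 0"
    using n4 by (simp add: pv_eq)
  then show "arc (linepath (pv (length vs - 1)) (pv 0))" by simp
  show "pathfinish (pchain vs (length vs - 2)) = pathstart (linepath (pv (length vs - 1)) (pv 0))"
    using n4 by (simp add: Suc_diff_Suc numeral_2_eq_2)
  show "pathfinish (linepath (pv (length vs - 1)) (pv 0)) = pathstart (pchain vs (length vs - 2))"
    by simp
  have "E j \<inter> E (length vs - 1) \<subseteq> {pv 0, pv (length vs - 1)}" if "j \<le> length vs - 2" for j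
  proof -
    have jm: "j mod length vs = j" "(length vs - 1) mod length vs = length vs - 1"
      using n4 that by auto
    then have "j mod length vs \<noteq> (length vs - 1) mod length vs" using that n4 by simp
    moreover have "Suc (length vs - Suc 0) = length vs" using n4 by simp
    ultimately show ?thesis using edge_int jm that n4
      by (auto split: if_splits simp: pv_eq)
  qed
  moreover have "E (length vs - 1) = closed_segment (pv (length vs - 1)) (pv 0)"
  proof -
    have "Suc (length vs - 1) = length vs" using n4 by simp
    then have "pv (Suc (length vs - 1)) = pv 0" using pv_add[of 0] by simp
    then show ?thesis by (simp add: E_def')
  qed
  ultimately show "path_image (pchain vs (length vs - 2)) \<inter> path_image (linepath (pv (length vs - 1)) (pv 0))
    \<subseteq> {pathstart (pchain vs (length vs - 2)), pathstart (linepath (pv (length vs - 1)) (pv 0))}"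
    by (auto simp: pchain_image)
qed

lemma ploop_image: "path_image ploop = BB"
proof -
  have fin: "pathfinish (pchain vs (length vs - 2)) = pathstart (linepath (pv (length vs - 1)) (pv 0))"
    using n4 by (simp add: Suc_diff_Suc numeral_2_eq_2)
  have e: "E (length vs - 1) = closed_segment (pv (length vs - 1)) (pv 0)"
  proof -
    have "Suc (length vs - 1) = length vs" using n4 by simp
    then have "pv (Suc (length vs - 1)) = pv 0" using pv_add[of 0] by simp
    then show ?thesis by (simp add: E_def')
  qed
  have "{..<length vs} = insert (length vs - 1) {..length vs - 2}" using n4 by auto
  then have "BB = E (length vs - 1) \<union> (\<Union>j\<le>length vs - 2. E j)"
    unfolding BB_def' by auto
  then show ?thesis unfolding ploop_def using fin e
    by (simp add: path_image_join pchain_image Un_commute)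
qed

lemma ploop_closed: "pathfinish ploop = pathstart ploop"
  by (simp add: ploop_def)

lemma BB_homeo: "BB homeomorphic sphere (0::pt) 1"
proof -
  have "BB homeomorphic sphere (0::complex) 1"
    using homeomorphic_simple_path_image_circle[OF ploop_simple ploop_closed, of 1 0]
    by (simp add: ploop_image)
  moreover have "sphere (0::complex) 1 homeomorphic sphere (0::pt) 1"
    by (rule homeomorphic_spheres_gen) auto
  ultimately show ?thesis using homeomorphic_trans by blast
qed

lemma jordan_close: assumes "p \<in> BB" shows "p \<in> closure INS" "p \<in> closure OUT"
proof -
  have bBB: "bounded BB" using compact_BB compact_imp_bounded by blast
  have nc: "\<not> connected (- BB)"
    using Jordan_Brouwer_separation[OF BB_homeo] by simp
  obtain C where C: "C \<in> components (- BB)" "bounded C"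
    using cobounded_has_bounded_component[of "- BB"] nc bBB by auto
  obtain D where D: "D \<in> components (- BB)" "\<not> bounded D"
    using cobounded_unbounded_components[of "- BB"] bBB by auto
  have fC: "frontier C = BB" and fD: "frontier D = BB"
    using Jordan_Brouwer_frontier[OF BB_homeo] C D by auto
  have "C \<subseteq> INS"
  proof
    fix x assume "x \<in> C"
    obtain y where "C = connected_component_set (- BB) y"
      using C(1) by (auto simp: components_iff)
    then have "connected_component_set (- BB) x = C" "x \<notin> BB"
      using \<open>x \<in> C\<close> connected_component_eq C(1) in_components_subset by blast+
    then show "x \<in> INS" using C(2) by (simp add: inside_def)
  qed
  moreover have "D \<subseteq> OUT"
  proof
    fix x assume "x \<in> D"
    obtain y where "D = connected_component_set (- BB) y"
      using D(1) by (auto simp: components_iff)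
    then have "connected_component_set (- BB) x = D" "x \<notin> BB"
      using \<open>x \<in> D\<close> connected_component_eq D(1) in_components_subset by blast+
    then show "x \<in> OUT" using D(2) by (simp add: outside_def)
  qed
  ultimately show "p \<in> closure INS" "p \<in> closure OUT"
    using assms fC fD closure_mono unfolding frontier_def by blast+
qed

end


lemma cseg_real: "(y::real) \<in> closed_segment y1 y2 \<longleftrightarrow> min y1 y2 \<le> y \<and> y \<le> max y1 y2"
  by (auto simp: closed_segment_eq_real_ivl)
lemma oseg_real: "(y::real) \<in> open_segment y1 y2 \<longleftrightarrow> min y1 y2 < y \<and> y < max y1 y2"
  by (auto simp: open_segment_eq_real_ivl)

lemma dist_hor: "dist (x::real, y::real) (x', y) = \<bar>x - x'\<bar>"
  by (simp add: dist_Pair_Pair dist_real_def)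

lemma dist_fst_le: "\<bar>fst z - fst w\<bar> \<le> dist z (w::pt)"
  by (metis dist_fst_le dist_real_def)
lemma dist_snd_le: "\<bar>snd z - snd w\<bar> \<le> dist z (w::pt)"
  by (metis dist_snd_le dist_real_def)

definition SO :: "pt list \<Rightarrow> real \<Rightarrow> pt \<Rightarrow> bool" where
  "SO vs \<sigma> p \<longleftrightarrow> (\<exists>e>0. \<forall>t. 0 < t \<and> t < e \<longrightarrow> p + (\<sigma> * t, 0) \<notin> poly_region vs)"

context opoly begin

lemma side_in: "connected C \<Longrightarrow> C \<inter> BB = {} \<Longrightarrow> x \<in> C \<Longrightarrow> y \<in> C \<Longrightarrow> x \<in> INS \<Longrightarrow> y \<in> INS"
  by (rule inside_same_component[of BB x y]) (auto simp: connected_component_def)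
lemma side_out: "connected C \<Longrightarrow> C \<inter> BB = {} \<Longrightarrow> x \<in> C \<Longrightarrow> y \<in> C \<Longrightarrow> x \<in> OUT \<Longrightarrow> y \<in> OUT"
  by (rule outside_same_component[of BB x y]) (auto simp: connected_component_def)
lemma notBB: "z \<notin> BB \<Longrightarrow> z \<in> INS \<or> z \<in> OUT"
  using inside_Un_outside[of BB] by blast
lemma OUT_notRR: "z \<in> OUT \<Longrightarrow> z \<notin> RR"
  unfolding RR_def' using inside_Int_outside[of BB] outside_no_overlap[of BB] by blast
lemma notRR_OUT: "z \<notin> RR \<Longrightarrow> z \<in> OUT"
  unfolding RR_def' using notBB by blast
lemma INS_notOUT: "z \<in> INS \<Longrightarrow> z \<notin> OUT"
  using inside_Int_outside[of BB] by blast
lemma INS_notBB: "z \<in> INS \<Longrightarrow> z \<notin> BB"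
  using inside_no_overlap[of BB] by blast
lemma BB_RR: "z \<in> BB \<Longrightarrow> z \<in> RR" unfolding RR_def' by blast
lemma INS_RR: "z \<in> INS \<Longrightarrow> z \<in> RR" unfolding RR_def' by blast

lemma near_edges:
  assumes "compact K" "\<forall>j<length vs. K \<inter> E j \<noteq> {} \<longrightarrow> j \<in> J"
  shows "\<exists>\<delta>>0. \<forall>z\<in>BB. \<forall>k\<in>K. dist z k < \<delta> \<longrightarrow> (\<exists>j\<in>J. j < length vs \<and> z \<in> E j)"
proof -
  define T where "T = (\<Union>j\<in>{j. j < length vs \<and> j \<notin> J}. E j)"
  have "closed T" unfolding T_def E_def' by (intro closed_UN) auto
  moreover have "K \<inter> T = {}" using assms(2) unfolding T_def by auto
  ultimately obtain \<delta> where d: "\<delta> > 0" "\<forall>x\<in>K. \<forall>y\<in>T. \<delta> \<le> dist x y"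
    using separate_compact_closed[OF assms(1)] by blast
  show ?thesis
  proof (intro exI[of _ \<delta>] conjI ballI impI)
    fix z k assume z: "z \<in> BB" "k \<in> K" "dist z k < \<delta>"
    then obtain j where j: "j < length vs" "z \<in> E j" unfolding BB_def' by auto
    show "\<exists>j\<in>J. j < length vs \<and> z \<in> E j"
    proof (cases "j \<in> J")
      case False
      then have "z \<in> T" using j unfolding T_def by auto
      then show ?thesis using d z by (metis dist_commute not_le)
    qed (use j in auto)
  qed (use d in auto)
qed

lemma vedge: assumes "vertical_edge vs i"
  obtains a y1 y2 where "pv i = (a, y1)" "pv (Suc i) = (a, y2)" "y1 \<noteq> y2"
proof -
  have "pv i = (fst (pv i), snd (pv i))" "pv (Suc i) = (fst (pv i), snd (pv (Suc i)))"
    using assms unfolding vertical_edge_def by (simp_all add: prod_eq_iff)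
  moreover have "snd (pv i) \<noteq> snd (pv (Suc i))"
    using assms pv_Suc_ne[of i] unfolding vertical_edge_def by (simp add: prod_eq_iff)
  ultimately show ?thesis using that by blast
qed

lemma E_vert: "pv i = (a, y1) \<Longrightarrow> pv (Suc i) = (a, y2) \<Longrightarrow>
   E i = {p. fst p = a \<and> min y1 y2 \<le> snd p \<and> snd p \<le> max y1 y2}"
  by (simp add: E_def' cseg_vert cseg_real)

lemma oseg_E_vert: "pv i = (a, y1) \<Longrightarrow> pv (Suc i) = (a, y2) \<Longrightarrow>
   open_segment (pv i) (pv (Suc i)) = {p. fst p = a \<and> min y1 y2 < snd p \<and> snd p < max y1 y2}"
  by (simp add: oseg_vert oseg_real)

lemma vrect:
  assumes ij: "pv i = (a, y1)" "pv (Suc i) = (a, y2)" and cd: "min y1 y2 < c" "c \<le> d" "d < max y1 y2"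
  shows "\<exists>\<delta>>0. \<forall>x y. \<bar>x - a\<bar> < \<delta> \<longrightarrow> c \<le> y \<longrightarrow> y \<le> d \<longrightarrow> x \<noteq> a \<longrightarrow> (x, y) \<notin> BB"
proof -
  define K where "K = closed_segment (a, c) (a, d)"
  have Kc: "compact K" unfolding K_def by simp
  have K: "K = {p. fst p = a \<and> c \<le> snd p \<and> snd p \<le> d}"
  proof -
    have mm: "min c d = c" "max c d = d" using cd(2) by simp_all
    show ?thesis by (simp add: K_def cseg_vert cseg_real mm)
  qed
  have KE: "K \<subseteq> E i"
  proof
    fix p assume "p \<in> K"
    then have p: "fst p = a" "c \<le> snd p" "snd p \<le> d" using K by auto
    then have "min y1 y2 \<le> snd p" "snd p \<le> max y1 y2" using cd by linarith+
    then show "p \<in> E i" using p E_vert[OF ij] by simp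
  qed
  have Kend: "pv i \<notin> K" "pv (Suc i) \<notin> K" unfolding ij K using cd
    by (cases "y1 \<le> y2"; simp add: min_def max_def)+
  have "\<forall>j<length vs. K \<inter> E j \<noteq> {} \<longrightarrow> j \<in> {i mod length vs}"
  proof (intro allI impI)
    fix j assume j: "j < length vs" "K \<inter> E j \<noteq> {}"
    show "j \<in> {i mod length vs}"
    proof (rule ccontr)
      assume "j \<notin> {i mod length vs}"
      then have "i mod length vs \<noteq> j mod length vs" using j by simp
      from edge_int[OF this] have "E i \<inter> E j \<subseteq> {pv i, pv (Suc i)}" by (auto split: if_splits)
      then show False using j KE Kend by blast
    qed
  qed
  from near_edges[OF Kc this] obtain \<delta> where d: "\<delta> > 0"
    "\<forall>z\<in>BB. \<forall>k\<in>K. dist z k < \<delta> \<longrightarrow> (\<exists>j\<in>{i mod length vs}. j < length vs \<and> z \<in> E j)" by blast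
  show ?thesis
  proof (intro exI[of _ \<delta>] conjI allI impI)
    fix x y assume xy: "\<bar>x - a\<bar> < \<delta>" "c \<le> y" "y \<le> d" "x \<noteq> a"
    show "(x, y) \<notin> BB"
    proof
      assume "(x, y) \<in> BB"
      moreover have "(a, y) \<in> K" using K xy by auto
      moreover have "dist (x, y) (a, y) < \<delta>" using xy by (simp add: dist_hor)
      ultimately have "(x, y) \<in> E i" using d by auto
      then show False using E_vert[OF ij] xy by auto
    qed
  qed (use d in auto)
qed

lemma SO_char:
  assumes line: "\<forall>x. x \<noteq> a \<and> \<bar>x - a\<bar> < \<delta> \<longrightarrow> (x, y) \<notin> BB" and sg: "\<sigma> = 1 \<or> \<sigma> = -1"
    and s: "0 < s" "s < \<delta>"
  shows "SO vs \<sigma> (a, y) \<longleftrightarrow> (a + \<sigma> * s, y) \<in> OUT"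
proof -
  define L where "L = (\<lambda>t. (a + \<sigma> * t, y)) ` {0<..<\<delta>}"
  have cL: "connected L" unfolding L_def
    by (intro connected_continuous_image continuous_intros) auto
  have LB: "L \<inter> BB = {}" unfolding L_def using line sg by auto
  have sL: "(a + \<sigma> * s, y) \<in> L" unfolding L_def using s by auto
  show ?thesis
  proof
    assume "SO vs \<sigma> (a, y)"
    then obtain e where e: "e > 0" "\<forall>t. 0 < t \<and> t < e \<longrightarrow> (a, y) + (\<sigma> * t, 0) \<notin> RR"
      unfolding SO_def by blast
    define t where "t = min e \<delta> / 2"
    have t: "0 < t" "t < e" "t < \<delta>" using e s by (auto simp: t_def)
    then have "(a + \<sigma> * t, y) \<notin> RR" using e by auto
    then have "(a + \<sigma> * t, y) \<in> OUT" by (rule notRR_OUT)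
    moreover have "(a + \<sigma> * t, y) \<in> L" unfolding L_def using t by auto
    ultimately show "(a + \<sigma> * s, y) \<in> OUT" using side_out[OF cL LB _ sL] by blast
  next
    assume "(a + \<sigma> * s, y) \<in> OUT"
    then show "SO vs \<sigma> (a, y)" unfolding SO_def
    proof (intro exI[of _ \<delta>] conjI allI impI)
      fix t assume "0 < t \<and> t < \<delta>"
      then have "(a + \<sigma> * t, y) \<in> L" unfolding L_def by auto
      then have "(a + \<sigma> * t, y) \<in> OUT" using side_out[OF cL LB sL] \<open>(a + \<sigma> * s, y) \<in> OUT\<close> by blast
      then show "(a, y) + (\<sigma> * t, 0) \<notin> RR" using OUT_notRR by simp
    qed (use s in auto)
  qed
qed

definition "rectS (a::real) \<delta> \<sigma> c d = {min a (a + \<sigma> * \<delta>)<..<max a (a + \<sigma> * \<delta>)} \<times> {c..(d::real)}"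

lemma rectS_conn: "connected (rectS a \<delta> \<sigma> c d)"
  unfolding rectS_def by (rule convex_connected, rule convex_Times) (simp_all add: convex_real_interval)

lemma rectS_mem: assumes "\<sigma> = 1 \<or> \<sigma> = -1" "\<delta> > 0" shows
   "(x, y) \<in> rectS a \<delta> \<sigma> c d \<longleftrightarrow> 0 < \<sigma> * (x - a) \<and> \<sigma> * (x - a) < \<delta> \<and> c \<le> y \<and> y \<le> d"
  using assms(1)
proof
  assume "\<sigma> = 1" then show ?thesis using assms(2) unfolding rectS_def by auto
next
  assume "\<sigma> = -1" then show ?thesis using assms(2) unfolding rectS_def by auto
qed

lemma rectS_BB:
  assumes "\<forall>x y. \<bar>x - a\<bar> < \<delta> \<longrightarrow> c \<le> y \<longrightarrow> y \<le> d \<longrightarrow> x \<noteq> a \<longrightarrow> (x, y) \<notin> BB"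
    "\<sigma> = 1 \<or> \<sigma> = -1" "\<delta> > 0"
  shows "rectS a \<delta> \<sigma> c d \<inter> BB = {}"
proof -
  have "(x, y) \<notin> BB" if "(x, y) \<in> rectS a \<delta> \<sigma> c d" for x y
  proof -
    have h: "0 < \<sigma> * (x - a)" "\<sigma> * (x - a) < \<delta>" "c \<le> y" "y \<le> d"
      using that rectS_mem[OF assms(2,3)] by auto
    have "\<bar>x - a\<bar> < \<delta>" "x \<noteq> a" using h assms(2) by auto
    then show ?thesis using assms(1) h by auto
  qed
  then show ?thesis by auto
qed

lemma side_dich:
  assumes ij: "pv i = (a, y1)" "pv (Suc i) = (a, y2)" and yp: "min y1 y2 < yp" "yp < max y1 y2"
  shows "SO vs (-1) (a, yp) \<longleftrightarrow> \<not> SO vs 1 (a, yp)"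
proof -
  define \<eta> where "\<eta> = min (yp - min y1 y2) (max y1 y2 - yp) / 2"
  have m1: "min (yp - min y1 y2) (max y1 y2 - yp) \<le> yp - min y1 y2"
    "min (yp - min y1 y2) (max y1 y2 - yp) \<le> max y1 y2 - yp"
    "min (yp - min y1 y2) (max y1 y2 - yp) > 0" using yp by auto
  have eta: "\<eta> > 0" "min y1 y2 < yp - \<eta>" "yp + \<eta> < max y1 y2" using m1 unfolding \<eta>_def by linarith+
  obtain \<delta> where d: "\<delta> > 0" "\<forall>x y. \<bar>x - a\<bar> < \<delta> \<longrightarrow> yp - \<eta> \<le> y \<longrightarrow> y \<le> yp + \<eta> \<longrightarrow> x \<noteq> a \<longrightarrow> (x, y) \<notin> BB"
    using vrect[OF ij eta(2) _ eta(3)] eta by auto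
  define s where "s = min \<delta> \<eta> / 2"
  have s: "0 < s" "s < \<delta>" "s < \<eta>" using d eta by (auto simp: s_def)
  have line: "\<forall>x. x \<noteq> a \<and> \<bar>x - a\<bar> < \<delta> \<longrightarrow> (x, yp) \<notin> BB" using d eta by auto
  have c1: "SO vs (-1) (a, yp) \<longleftrightarrow> (a - s, yp) \<in> OUT" using SO_char[OF line _ s(1,2), of "-1"] by simp
  have c2: "SO vs 1 (a, yp) \<longleftrightarrow> (a + s, yp) \<in> OUT" using SO_char[OF line _ s(1,2), of "1"] by simp
  define RL where "RL = rectS a \<delta> (-1) (yp - \<eta>) (yp + \<eta>)"
  define RRt where "RRt = rectS a \<delta> 1 (yp - \<eta>) (yp + \<eta>)"
  have cRL: "connected RL" "RL \<inter> BB = {}" unfolding RL_def using rectS_conn rectS_BB[OF d(2) _ d(1)] by auto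
  have cRR: "connected RRt" "RRt \<inter> BB = {}" unfolding RRt_def using rectS_conn rectS_BB[OF d(2) _ d(1)] by auto
  have P: "(a - s, yp) \<in> RL" unfolding RL_def using rectS_mem[of "-1" \<delta>] s eta by auto
  have Q: "(a + s, yp) \<in> RRt" unfolding RRt_def using rectS_mem[of "1" \<delta>] s eta by auto
  have pB: "(a, yp) \<in> BB" using E_vert[OF ij] E_sub_BB[of i] yp by auto
  have loc: "\<exists>z\<in>X. z \<in> RL \<or> z \<in> RRt" if "(a, yp) \<in> closure X" "X \<inter> BB = {}" for X
  proof -
    from that(1) have "\<forall>e>0. \<exists>y\<in>X. dist y (a, yp) < e" by (simp add: closure_approachable)
    then obtain z where z: "z \<in> X" "dist z (a, yp) < s" using s(1) by blast
    have zB: "z \<notin> BB" using z(1) that(2) by blast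
    have "\<bar>fst z - a\<bar> \<le> dist z (a, yp)" "\<bar>snd z - yp\<bar> \<le> dist z (a, yp)"
      using dist_fst_le[of z "(a, yp)"] dist_snd_le[of z "(a, yp)"] by simp_all
    then have h1: "\<bar>fst z - a\<bar> < \<delta>" "\<bar>snd z - yp\<bar> < \<eta>" using z(2) s by linarith+
    have "fst z \<noteq> a"
    proof
      assume "fst z = a"
      moreover have "min y1 y2 \<le> snd z" "snd z \<le> max y1 y2" using h1(2) eta by linarith+
      ultimately have "z \<in> E i" using E_vert[OF ij] by blast
      then show False using zB E_sub_BB by blast
    qed
    obtain zx zy where zz: "z = (zx, zy)" by (cases z)
    have "zx < a \<or> zx > a" using \<open>fst z \<noteq> a\<close> zz by auto
    then have "z \<in> RL \<or> z \<in> RRt"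
    proof
      assume "zx < a"
      moreover have "\<bar>zx - a\<bar> < \<delta>" "\<bar>zy - yp\<bar> < \<eta>" using h1 zz by simp_all
      ultimately have "0 < -1 * (zx - a)" "-1 * (zx - a) < \<delta>" "yp - \<eta> \<le> zy" "zy \<le> yp + \<eta>"
        by (simp_all add: abs_if split: if_splits)
      then have "z \<in> RL" unfolding RL_def zz using rectS_mem[of "-1" \<delta> zx zy] d(1) by simp
      then show ?thesis ..
    next
      assume "zx > a"
      moreover have "\<bar>zx - a\<bar> < \<delta>" "\<bar>zy - yp\<bar> < \<eta>" using h1 zz by simp_all
      ultimately have "0 < 1 * (zx - a)" "1 * (zx - a) < \<delta>" "yp - \<eta> \<le> zy" "zy \<le> yp + \<eta>"
        by (simp_all add: abs_if split: if_splits)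
      then have "z \<in> RRt" unfolding RRt_def zz using rectS_mem[of "1" \<delta> zx zy] d(1) by simp
      then show ?thesis ..
    qed
    then show ?thesis using z by blast
  qed
  obtain z where z: "z \<in> INS" "z \<in> RL \<or> z \<in> RRt"
    using loc[OF jordan_close(1)[OF pB]] inside_no_overlap[of BB] by blast
  have i1: "(a - s, yp) \<in> INS \<or> (a + s, yp) \<in> INS"
    using z(2)
  proof
    assume "z \<in> RL" then show ?thesis using side_in[OF cRL(1,2) _ P z(1)] by blast
  next
    assume "z \<in> RRt" then show ?thesis using side_in[OF cRR(1,2) _ Q z(1)] by blast
  qed
  obtain z' where z': "z' \<in> OUT" "z' \<in> RL \<or> z' \<in> RRt"
    using loc[OF jordan_close(2)[OF pB]] outside_no_overlap[of BB] by blast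
  have o1: "(a - s, yp) \<in> OUT \<or> (a + s, yp) \<in> OUT"
    using z'(2)
  proof
    assume "z' \<in> RL" then show ?thesis using side_out[OF cRL(1,2) _ P z'(1)] by blast
  next
    assume "z' \<in> RRt" then show ?thesis using side_out[OF cRR(1,2) _ Q z'(1)] by blast
  qed
  have nb: "(a - s, yp) \<notin> BB" "(a + s, yp) \<notin> BB" using cRL(2) cRR(2) P Q by blast+
  have "(a - s, yp) \<in> OUT \<longleftrightarrow> (a + s, yp) \<notin> OUT"
    using i1 o1 notBB[OF nb(1)] notBB[OF nb(2)] INS_notOUT by blast
  then show ?thesis using c1 c2 by simp
qed

lemma side_const:
  assumes ij: "pv i = (a, y1)" "pv (Suc i) = (a, y2)" and yp: "min y1 y2 < yp" "yp < max y1 y2"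
    and yq: "min y1 y2 < yq" "yq < max y1 y2" and sg: "\<sigma> = 1 \<or> \<sigma> = -1"
  shows "SO vs \<sigma> (a, yp) \<longleftrightarrow> SO vs \<sigma> (a, yq)"
proof -
  have "min y1 y2 < min yp yq" "min yp yq \<le> max yp yq" "max yp yq < max y1 y2" using yp yq by auto
  from vrect[OF ij this] obtain \<delta> where d: "\<delta> > 0" "\<forall>x y. \<bar>x - a\<bar> < \<delta> \<longrightarrow> min yp yq \<le> y \<longrightarrow> y \<le> max yp yq \<longrightarrow> x \<noteq> a \<longrightarrow> (x, y) \<notin> BB"
    by blast
  define s where "s = \<delta> / 2"
  have s: "0 < s" "s < \<delta>" using d by (auto simp: s_def)
  have lp: "\<forall>x. x \<noteq> a \<and> \<bar>x - a\<bar> < \<delta> \<longrightarrow> (x, yp) \<notin> BB" using d by auto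
  have lq: "\<forall>x. x \<noteq> a \<and> \<bar>x - a\<bar> < \<delta> \<longrightarrow> (x, yq) \<notin> BB" using d by auto
  define RS where "RS = rectS a \<delta> \<sigma> (min yp yq) (max yp yq)"
  have c: "connected RS" "RS \<inter> BB = {}" unfolding RS_def using rectS_conn rectS_BB[OF d(2) sg d(1)] by auto
  have P: "(a + \<sigma> * s, yp) \<in> RS" "(a + \<sigma> * s, yq) \<in> RS"
    unfolding RS_def using rectS_mem[OF sg d(1)] s sg by auto
  show ?thesis using SO_char[OF lp sg s] SO_char[OF lq sg s] side_out[OF c P(2) P(1)] side_out[OF c P(1) P(2)]
    by blast
qed

end


lemma dist_pair_le: "dist (x1::real, y1::real) (x2, y2) \<le> \<bar>x1 - x2\<bar> + \<bar>y1 - y2\<bar>"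
  using sqrt_sum_squares_le_sum_abs[of "x1 - x2" "y1 - y2"]
  by (simp add: dist_Pair_Pair dist_real_def)

lemma prev_mod: "0 < n \<Longrightarrow> k < n \<Longrightarrow> Suc k mod n = j mod n \<Longrightarrow> k = (j + n - 1) mod (n::nat)"
proof -
  assume n: "0 < n" "k < n" "Suc k mod n = j mod n"
  have "(j + (n - 1)) mod n = (j mod n + (n - 1)) mod n" by (simp add: mod_add_left_eq)
  also have "\<dots> = (Suc k mod n + (n - 1)) mod n" using n by simp
  also have "\<dots> = (Suc k + (n - 1)) mod n" by (simp add: mod_add_left_eq)
  also have "Suc k + (n - 1) = k + n" using n by simp
  also have "(k + n) mod n = k" using n by simp
  finally show ?thesis using n by simp
qed

definition "Qd (v::pt) \<alpha> \<beta> = {z. 0 \<le> \<alpha> * (snd z - snd v) \<and> 0 \<le> \<beta> * (fst z - fst v)}"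

lemma quarter_eq:
  assumes "p1 = v + (0, \<alpha>)" "p2 = v + (\<beta>, 0)" "\<alpha> \<noteq> 0" "\<beta> \<noteq> 0"
  shows "{v + s *\<^sub>R (p1 - v) + t *\<^sub>R (p2 - v) | s t. 0 \<le> s \<and> 0 \<le> t} = Qd v \<alpha> \<beta>"
proof (intro set_eqI iffI)
  fix z assume "z \<in> {v + s *\<^sub>R (p1 - v) + t *\<^sub>R (p2 - v) | s t. 0 \<le> s \<and> 0 \<le> t}"
  then obtain s t where st: "0 \<le> s" "0 \<le> t" "z = v + s *\<^sub>R (0, \<alpha>) + t *\<^sub>R (\<beta>, 0)"
    using assms by auto
  then have "snd z - snd v = s * \<alpha>" "fst z - fst v = t * \<beta>" by auto
  then show "z \<in> Qd v \<alpha> \<beta>" unfolding Qd_def using st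
    by (simp add: mult.left_commute[of \<alpha>] mult.left_commute[of \<beta>])
next
  fix z assume "z \<in> Qd v \<alpha> \<beta>"
  then have h: "0 \<le> \<alpha> * (snd z - snd v)" "0 \<le> \<beta> * (fst z - fst v)" by (auto simp: Qd_def)
  define s where "s = (snd z - snd v) / \<alpha>"
  define t where "t = (fst z - fst v) / \<beta>"
  have s0: "0 \<le> s" using h(1) unfolding s_def by (auto simp: zero_le_divide_iff zero_le_mult_iff)
  have t0: "0 \<le> t" using h(2) unfolding t_def by (auto simp: zero_le_divide_iff zero_le_mult_iff)
  have "z = v + s *\<^sub>R (p1 - v) + t *\<^sub>R (p2 - v)"
    using assms unfolding s_def t_def by (simp add: prod_eq_iff)
  then show "z \<in> {v + s *\<^sub>R (p1 - v) + t *\<^sub>R (p2 - v) | s t. 0 \<le> s \<and> 0 \<le> t}"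
    using s0 t0 by blast
qed

context opoly begin

lemma pv_Suc_add[simp]: "pv (Suc (j + length vs)) = pv (Suc j)"
  using pv_add[of "Suc j"] by simp
lemma H_add[simp]: "horizontal_edge vs (j + length vs) \<longleftrightarrow> horizontal_edge vs j"
  by (simp add: horizontal_edge_def)
lemma V_add[simp]: "vertical_edge vs (j + length vs) \<longleftrightarrow> vertical_edge vs j"
  by (simp add: vertical_edge_def)

lemma Suc_prev: "Suc (j + length vs - 1) = j + length vs" using npos by simp
lemma pv_Suc_prev[simp]: "pv (Suc (j + length vs - 1)) = pv j" "pv (Suc (j + length vs - Suc 0)) = pv j"
  using Suc_prev[of j] pv_add[of j] by simp_all

lemma vertex_near:
  "\<exists>r>0. \<forall>z\<in>BB. dist z (pv j) < r \<longrightarrow>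
      z \<in> closed_segment (pv (j + length vs - 1)) (pv j) \<or> z \<in> closed_segment (pv j) (pv (Suc j))"
proof -
  have "\<forall>k<length vs. {pv j} \<inter> E k \<noteq> {} \<longrightarrow> k \<in> {j mod length vs, (j + length vs - 1) mod length vs}"
  proof (intro allI impI)
    fix k assume k: "k < length vs" "{pv j} \<inter> E k \<noteq> {}"
    show "k \<in> {j mod length vs, (j + length vs - 1) mod length vs}"
    proof (rule ccontr)
      assume nk: "k \<notin> {j mod length vs, (j + length vs - 1) mod length vs}"
      then have ne: "j mod length vs \<noteq> k mod length vs" using k by simp
      have "pv j \<in> E j" by (simp add: E_def')
      then have pj: "pv j \<in> E j \<inter> E k" using k by auto
      show False
      proof (cases "Suc j mod length vs = k mod length vs")
        case True
        then show ?thesis using edge_int[OF ne] pj pv_Suc_ne[of j] by auto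
      next
        case False
        show ?thesis
        proof (cases "Suc k mod length vs = j mod length vs")
          case True
          then have "k = (j + length vs - 1) mod length vs" using prev_mod[OF npos k(1)] by blast
          then show ?thesis using nk by simp
        next
          case False2: False
          then show ?thesis using edge_int[OF ne] pj False by auto
        qed
      qed
    qed
  qed
  from near_edges[OF _ this] obtain r where r: "r > 0"
    "\<forall>z\<in>BB. \<forall>k\<in>{pv j}. dist z k < r \<longrightarrow> (\<exists>i\<in>{j mod length vs, (j + length vs - 1) mod length vs}. i < length vs \<and> z \<in> E i)"
    by auto
  show ?thesis
  proof (intro exI[of _ r] conjI ballI impI)
    fix z assume "z \<in> BB" "dist z (pv j) < r"
    then have "z \<in> E j \<or> z \<in> E (j + length vs - 1)" using r(2) by auto
    then show "z \<in> closed_segment (pv (j + length vs - 1)) (pv j) \<or> z \<in> closed_segment (pv j) (pv (Suc j))"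
      by (auto simp: E_def')
  qed (use r in auto)
qed

definition corner :: "nat \<Rightarrow> real \<Rightarrow> real \<Rightarrow> real \<Rightarrow> real \<Rightarrow> bool" where
  "corner j a b \<alpha> \<beta> \<longleftrightarrow> pv j = (a, b) \<and> \<alpha> \<noteq> 0 \<and> \<beta> \<noteq> 0 \<and>
     ((pv (j + length vs - 1) = (a, b + \<alpha>) \<and> pv (Suc j) = (a + \<beta>, b)) \<or>
      (pv (j + length vs - 1) = (a + \<beta>, b) \<and> pv (Suc j) = (a, b + \<alpha>)))"

lemma corner_exists: "\<exists>a b \<alpha> \<beta>. corner j a b \<alpha> \<beta>"
proof -
  obtain a b where ab: "pv j = (a, b)" by (cases "pv j")
  obtain u1 u2 where u: "pv (j + length vs - 1) = (u1, u2)" by (cases "pv (j + length vs - 1)")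
  obtain w1 w2 where w: "pv (Suc j) = (w1, w2)" by (cases "pv (Suc j)")
  have un: "(u1, u2) \<noteq> (a, b)" using pv_Suc_ne[of "j + length vs - 1"] u ab by auto
  have wn: "(w1, w2) \<noteq> (a, b)" using pv_Suc_ne[of j] w ab by simp
  have VH1: "vertical_edge vs (j + length vs - 1) \<longleftrightarrow> horizontal_edge vs j"
  proof -
    have "horizontal_edge vs (Suc (j + length vs - 1)) = horizontal_edge vs j"
      using H_add[of j] Suc_prev[of j] by simp
    then show ?thesis using V_H_Suc[of "j + length vs - 1"] by simp
  qed
  show ?thesis
  proof (cases "vertical_edge vs j")
    case True
    then have "horizontal_edge vs (j + length vs - 1)" using VH1 VH[of "j + length vs - 1"] not_VH[of j] by blast
    then have "u2 = b" "w1 = a" using True u w ab by (auto simp: vertical_edge_def horizontal_edge_def)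
    then have "corner j a b (w2 - b) (u1 - a)" unfolding corner_def using ab u w un wn by auto
    then show ?thesis by blast
  next
    case False
    then have "horizontal_edge vs j" using VH by blast
    then have "vertical_edge vs (j + length vs - 1)" using VH1 by blast
    then have "u1 = a" "w2 = b" using \<open>horizontal_edge vs j\<close> u w ab by (auto simp: vertical_edge_def horizontal_edge_def)
    then have "corner j a b (u2 - b) (w1 - a)" unfolding corner_def using ab u w un wn by auto
    then show ?thesis by blast
  qed
qed

lemma seg_off: "(\<alpha>::real) \<noteq> 0 \<Longrightarrow> y \<in> closed_segment b (b + \<alpha>) \<longleftrightarrow> 0 \<le> \<alpha> * (y - b) \<and> \<bar>y - b\<bar> \<le> \<bar>\<alpha>\<bar>"
  by (cases "\<alpha> > 0") (auto simp: closed_segment_eq_real_ivl zero_le_mult_iff abs_le_iff)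

lemma cseg_up: "(\<alpha>::real) \<noteq> 0 \<Longrightarrow> z \<in> closed_segment (a::real, b::real) (a, b + \<alpha>) \<longleftrightarrow>
   fst z = a \<and> 0 \<le> \<alpha> * (snd z - b) \<and> \<bar>snd z - b\<bar> \<le> \<bar>\<alpha>\<bar>"
  using seg_off[of \<alpha> "snd z" b] by (simp add: cseg_vert)

lemma cseg_right: "(\<beta>::real) \<noteq> 0 \<Longrightarrow> z \<in> closed_segment (a::real, b::real) (a + \<beta>, b) \<longleftrightarrow>
   snd z = b \<and> 0 \<le> \<beta> * (fst z - a) \<and> \<bar>fst z - a\<bar> \<le> \<bar>\<beta>\<bar>"
  using seg_off[of \<beta> "fst z" a] by (simp add: cseg_horiz)

lemma corner_near:
  assumes c: "corner j a b \<alpha> \<beta>"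
  shows "\<exists>r>0. r \<le> \<bar>\<alpha>\<bar> \<and> r \<le> \<bar>\<beta>\<bar> \<and> (\<forall>z. dist z (a, b) < r \<longrightarrow>
     (z \<in> BB \<longleftrightarrow> (fst z = a \<and> 0 \<le> \<alpha> * (snd z - b)) \<or> (snd z = b \<and> 0 \<le> \<beta> * (fst z - a))))"
proof -
  have c': "pv j = (a, b)" "\<alpha> \<noteq> 0" "\<beta> \<noteq> 0" using c by (auto simp: corner_def)
  obtain r0 where r0: "r0 > 0" "\<forall>z\<in>BB. dist z (pv j) < r0 \<longrightarrow>
      z \<in> closed_segment (pv (j + length vs - 1)) (pv j) \<or> z \<in> closed_segment (pv j) (pv (Suc j))"
    using vertex_near by blast
  have segs: "(z \<in> closed_segment (pv (j + length vs - 1)) (pv j) \<or> z \<in> closed_segment (pv j) (pv (Suc j))) \<longleftrightarrow>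
      (z \<in> closed_segment (a, b) (a, b + \<alpha>) \<or> z \<in> closed_segment (a, b) (a + \<beta>, b))" for z
    using c unfolding corner_def by (auto simp: closed_segment_commute)
  have segsB: "closed_segment (a, b) (a, b + \<alpha>) \<subseteq> BB" "closed_segment (a, b) (a + \<beta>, b) \<subseteq> BB"
  proof -
    have "closed_segment (pv (j + length vs - 1)) (pv j) \<subseteq> BB" "closed_segment (pv j) (pv (Suc j)) \<subseteq> BB"
      using E_sub_BB[of "j + length vs - 1"] E_sub_BB[of j] by (auto simp: E_def')
    then show "closed_segment (a, b) (a, b + \<alpha>) \<subseteq> BB" "closed_segment (a, b) (a + \<beta>, b) \<subseteq> BB"
      using c unfolding corner_def by (auto simp: closed_segment_commute)
  qed
  define r where "r = min r0 (min \<bar>\<alpha>\<bar> \<bar>\<beta>\<bar>)"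
  have r: "r > 0" "r \<le> r0" "r \<le> \<bar>\<alpha>\<bar>" "r \<le> \<bar>\<beta>\<bar>" using r0 c' by (auto simp: r_def)
  show ?thesis
  proof (intro exI[of _ r] conjI allI impI)
    fix z assume dz: "dist z (a, b) < r"
    have h: "\<bar>fst z - a\<bar> < r" "\<bar>snd z - b\<bar> < r"
      using dist_fst_le[of z "(a, b)"] dist_snd_le[of z "(a, b)"] dz by simp_all
    show "z \<in> BB \<longleftrightarrow> (fst z = a \<and> 0 \<le> \<alpha> * (snd z - b)) \<or> (snd z = b \<and> 0 \<le> \<beta> * (fst z - a))"
    proof
      assume "z \<in> BB"
      then have "z \<in> closed_segment (a, b) (a, b + \<alpha>) \<or> z \<in> closed_segment (a, b) (a + \<beta>, b)"
        using r0(2) segs[of z] dz r c' by auto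
      then show "(fst z = a \<and> 0 \<le> \<alpha> * (snd z - b)) \<or> (snd z = b \<and> 0 \<le> \<beta> * (fst z - a))"
        using cseg_up[OF c'(2)] cseg_right[OF c'(3)] by blast
    next
      assume "(fst z = a \<and> 0 \<le> \<alpha> * (snd z - b)) \<or> (snd z = b \<and> 0 \<le> \<beta> * (fst z - a))"
      then show "z \<in> BB"
      proof
        assume A: "fst z = a \<and> 0 \<le> \<alpha> * (snd z - b)"
        have "\<bar>snd z - b\<bar> \<le> \<bar>\<alpha>\<bar>" using h(2) r(3) by linarith
        then have "z \<in> closed_segment (a, b) (a, b + \<alpha>)" using cseg_up[OF c'(2)] A by blast
        then show "z \<in> BB" using segsB by blast
      next
        assume A: "snd z = b \<and> 0 \<le> \<beta> * (fst z - a)"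
        have "\<bar>fst z - a\<bar> \<le> \<bar>\<beta>\<bar>" using h(1) r(4) by linarith
        then have "z \<in> closed_segment (a, b) (a + \<beta>, b)" using cseg_right[OF c'(3)] A by blast
        then show "z \<in> BB" using segsB by blast
      qed
    qed
  qed (use r in auto)
qed

lemma convex_corner:
  assumes c: "corner j a b \<alpha> \<beta>"
  shows "convex_vertex vs j \<longleftrightarrow> (\<exists>e>0. RR \<inter> ball (a, b) e = Qd (a, b) \<alpha> \<beta> \<inter> ball (a, b) e)"
proof -
  have c': "pv j = (a, b)" "\<alpha> \<noteq> 0" "\<beta> \<noteq> 0" using c by (auto simp: corner_def)
  have "pv (j + length vs - 1) = (a, b) + (0, \<alpha>) \<and> pv (Suc j) = (a, b) + (\<beta>, 0) \<or>
        pv (j + length vs - 1) = (a, b) + (\<beta>, 0) \<and> pv (Suc j) = (a, b) + (0, \<alpha>)"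
    using c unfolding corner_def by auto
  then show ?thesis
  proof
    assume h: "pv (j + length vs - 1) = (a, b) + (0, \<alpha>) \<and> pv (Suc j) = (a, b) + (\<beta>, 0)"
    show ?thesis unfolding convex_vertex_def Let_def c'(1)
      using quarter_eq[of "pv (j + length vs - 1)" "(a, b)" \<alpha> "pv (Suc j)" \<beta>] h c' by simp
  next
    assume h: "pv (j + length vs - 1) = (a, b) + (\<beta>, 0) \<and> pv (Suc j) = (a, b) + (0, \<alpha>)"
    have sw: "{v + s *\<^sub>R (p - v) + t *\<^sub>R (q - v) | s t. 0 \<le> s \<and> 0 \<le> t} =
              {v + s *\<^sub>R (q - v) + t *\<^sub>R (p - v) | s t. 0 \<le> s \<and> 0 \<le> t}" for v p q :: pt
    proof (intro set_eqI iffI)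
      fix z assume "z \<in> {v + s *\<^sub>R (p - v) + t *\<^sub>R (q - v) |s t. 0 \<le> s \<and> 0 \<le> t}"
      then obtain s t where "z = v + s *\<^sub>R (p - v) + t *\<^sub>R (q - v)" "0 \<le> s" "0 \<le> t" by blast
      then show "z \<in> {v + s *\<^sub>R (q - v) + t *\<^sub>R (p - v) |s t. 0 \<le> s \<and> 0 \<le> t}"
        by (intro CollectI exI[of _ t] exI[of _ s]) (simp add: algebra_simps)
    next
      fix z assume "z \<in> {v + s *\<^sub>R (q - v) + t *\<^sub>R (p - v) |s t. 0 \<le> s \<and> 0 \<le> t}"
      then obtain s t where "z = v + s *\<^sub>R (q - v) + t *\<^sub>R (p - v)" "0 \<le> s" "0 \<le> t" by blast
      then show "z \<in> {v + s *\<^sub>R (p - v) + t *\<^sub>R (q - v) |s t. 0 \<le> s \<and> 0 \<le> t}"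
        by (intro CollectI exI[of _ t] exI[of _ s]) (simp add: algebra_simps)
    qed
    have q: "{(a, b) + s *\<^sub>R (pv (Suc j) - (a, b)) + t *\<^sub>R (pv (j + length vs - 1) - (a, b)) | s t. 0 \<le> s \<and> 0 \<le> t}
       = Qd (a, b) \<alpha> \<beta>"
      by (rule quarter_eq) (use h c' in auto)
    have e: "{(a, b) + s *\<^sub>R (pv (j + length vs - 1) - (a, b)) + t *\<^sub>R (pv (Suc j) - (a, b)) | s t. 0 \<le> s \<and> 0 \<le> t}
      = {(a, b) + s *\<^sub>R (pv (Suc j) - (a, b)) + t *\<^sub>R (pv (j + length vs - 1) - (a, b)) | s t. 0 \<le> s \<and> 0 \<le> t}"
      by (rule sw)
    have d: "(pv (j + length vs - 1) - (a, b)) \<bullet> (pv (Suc j) - (a, b)) = 0" using h by simp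
    show ?thesis unfolding convex_vertex_def Let_def c'(1) e q using d by simp
  qed
qed

end


lemma conv_snd_lt: "convex {z::pt. \<alpha> * (snd z - b) < c}"
proof -
  have "{z::pt. \<alpha> * (snd z - b) < c} = {z. inner (0, \<alpha>) z < c + \<alpha> * b}"
    by (auto simp: inner_prod_def algebra_simps)
  then show ?thesis using convex_halfspace_lt by metis
qed
lemma conv_snd_gt: "convex {z::pt. c < \<alpha> * (snd z - b)}"
proof -
  have "{z::pt. c < \<alpha> * (snd z - b)} = {z. inner (0, \<alpha>) z > c + \<alpha> * b}"
    by (auto simp: inner_prod_def algebra_simps)
  then show ?thesis using convex_halfspace_gt by metis
qed
lemma conv_fst_gt: "convex {z::pt. c < \<beta> * (fst z - a)}"
proof -
  have "{z::pt. c < \<beta> * (fst z - a)} = {z. inner (\<beta>, 0) z > c + \<beta> * a}"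
    by (auto simp: inner_prod_def algebra_simps)
  then show ?thesis using convex_halfspace_gt by metis
qed

context opoly begin

lemma other_end:
  assumes V: "vertical_edge vs k" and jk: "j = k \<or> j = Suc k" and c: "corner j a b \<alpha> \<beta>"
  shows "(if j = k then pv (Suc k) else pv k) = (a, b + \<alpha>)"
proof -
  have c': "pv j = (a, b)" "\<alpha> \<noteq> 0" "\<beta> \<noteq> 0" using c by (auto simp: corner_def)
  define oth where "oth = (if j = k then pv (Suc k) else pv k)"
  have "oth = pv (Suc j) \<or> oth = pv (j + length vs - 1)"
  proof (cases "j = k")
    case True then show ?thesis by (simp add: oth_def)
  next
    case False
    then have "j = Suc k" using jk by simp
    then have "j + length vs - 1 = k + length vs" using npos by simp
    then show ?thesis using False by (simp add: oth_def)
  qed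
  moreover have "fst oth = a" using V jk c'(1) unfolding oth_def vertical_edge_def by (auto split: if_splits)
  ultimately have "oth = (a, b + \<alpha>) \<or> oth = (a + \<beta>, b)" using c unfolding corner_def by auto
  then have "oth = (a, b + \<alpha>)"
  proof
    assume "oth = (a + \<beta>, b)"
    then have "fst oth = a + \<beta>" by simp
    then show ?thesis using \<open>fst oth = a\<close> c'(3) by simp
  qed
  then show ?thesis by (simp add: oth_def)
qed

lemma lk_end:
  assumes V: "vertical_edge vs k" and lo: "left_outside vs k" and jk: "j = k \<or> j = Suc k"
    and cv: "convex_vertex vs j" and c: "corner j a b \<alpha> \<beta>"
  shows "0 < \<beta> \<and> (\<exists>e>0. \<forall>z\<in>RR. dist z (a, b) < e \<longrightarrow> a \<le> fst z \<and> 0 \<le> \<alpha> * (snd z - b))"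
proof -
  have c': "pv j = (a, b)" "\<alpha> \<noteq> 0" "\<beta> \<noteq> 0" using c by (auto simp: corner_def)
  have oe: "(if j = k then pv (Suc k) else pv k) = (a, b + \<alpha>)" by (rule other_end[OF V jk c])
  have seg: "open_segment (pv k) (pv (Suc k)) = open_segment (a, b) (a, b + \<alpha>)"
  proof (cases "j = k")
    case True then show ?thesis using oe c'(1) by simp
  next
    case False then have "j = Suc k" using jk by simp
    then show ?thesis using oe c'(1) False by (simp add: open_segment_commute)
  qed
  obtain e0 where e0: "e0 > 0" "RR \<inter> ball (a, b) e0 = Qd (a, b) \<alpha> \<beta> \<inter> ball (a, b) e0"
    using cv convex_corner[OF c] by blast
  have "\<beta> > 0"
  proof (rule ccontr)
    assume "\<not> \<beta> > 0" then have bn: "\<beta> < 0" using c' by simp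
    define s where "s = min (1/2) (e0 / (4 * \<bar>\<alpha>\<bar>))"
    have s: "0 < s" "s < 1" using e0 c'(2) by (auto simp: s_def)
    have "s \<le> e0 / (4 * \<bar>\<alpha>\<bar>)" by (simp add: s_def)
    then have "s * \<bar>\<alpha>\<bar> \<le> e0 / (4 * \<bar>\<alpha>\<bar>) * \<bar>\<alpha>\<bar>" by (rule mult_right_mono) simp
    then have sa: "\<bar>s * \<alpha>\<bar> \<le> e0 / 4" using c'(2) s by (simp add: abs_mult)
    define p where "p = (a, b + s * \<alpha>)"
    have "p = (1 - s) *\<^sub>R (a, b) + s *\<^sub>R (a, b + \<alpha>)" by (simp add: p_def algebra_simps)
    then have pin: "p \<in> open_segment (pv k) (pv (Suc k))" unfolding seg in_segment(2)
      using s c'(2) by auto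
    obtain ep where ep: "ep > 0" "\<forall>t. 0 < t \<and> t < ep \<longrightarrow> p - (t, 0) \<notin> RR"
      using lo pin unfolding left_outside_def by blast
    define t where "t = min ep e0 / 2"
    have t: "0 < t" "t < ep" "t \<le> e0 / 2" using ep e0 by (auto simp: t_def)
    have z1: "p - (t, 0) = (a - t, b + s * \<alpha>)" by (simp add: p_def)
    have "dist (a - t, b + s * \<alpha>) (a, b) \<le> \<bar>a - t - a\<bar> + \<bar>b + s * \<alpha> - b\<bar>" by (rule dist_pair_le)
    also have "\<dots> = t + \<bar>s * \<alpha>\<bar>" using t by simp
    finally have "dist (a - t, b + s * \<alpha>) (a, b) < e0" using t sa e0 by linarith
    then have inb: "(a - t, b + s * \<alpha>) \<in> ball (a, b) e0" by (simp add: dist_commute)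
    have "\<alpha> * (b + s * \<alpha> - b) = s * (\<alpha> * \<alpha>)" by (simp add: algebra_simps)
    moreover have "0 \<le> s * (\<alpha> * \<alpha>)" using s by simp
    ultimately have "0 \<le> \<alpha> * (b + s * \<alpha> - b)" by linarith
    moreover
    moreover have "0 \<le> \<beta> * (a - t - a)"
    proof -
      have "\<beta> * t < 0" using bn t(1) by (simp add: mult_neg_pos)
      then show ?thesis by simp
    qed
    ultimately have "(a - t, b + s * \<alpha>) \<in> Qd (a, b) \<alpha> \<beta>" unfolding Qd_def by (simp only: mem_Collect_eq fst_conv snd_conv)
    then have "(a - t, b + s * \<alpha>) \<in> RR" using e0(2) inb by blast
    then show False using ep t z1 by auto
  qed
  moreover have "\<forall>z\<in>RR. dist z (a, b) < e0 \<longrightarrow> a \<le> fst z \<and> 0 \<le> \<alpha> * (snd z - b)"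
  proof (intro ballI impI)
    fix z assume z: "z \<in> RR" "dist z (a, b) < e0"
    then have "z \<in> ball (a, b) e0" by (simp add: dist_commute)
    then have "z \<in> Qd (a, b) \<alpha> \<beta>" using e0(2) z(1) by blast
    then show "a \<le> fst z \<and> 0 \<le> \<alpha> * (snd z - b)" using \<open>\<beta> > 0\<close> by (auto simp: Qd_def zero_le_mult_iff)
  qed
  ultimately show ?thesis using e0(1) by blast
qed

lemma lk_interior:
  assumes V: "vertical_edge vs k" and lo: "left_outside vs k" and p: "p \<in> open_segment (pv k) (pv (Suc k))"
  shows "\<exists>e>0. \<forall>z\<in>RR. dist z p < e \<longrightarrow> fst p \<le> fst z"
proof -
  obtain a y1 y2 where ij: "pv k = (a, y1)" "pv (Suc k) = (a, y2)" "y1 \<noteq> y2" using vedge[OF V] by blast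
  obtain yp where pp: "p = (a, yp)" "min y1 y2 < yp" "yp < max y1 y2"
    using p oseg_E_vert[OF ij(1,2)] by (cases p) auto
  define \<eta> where "\<eta> = min (yp - min y1 y2) (max y1 y2 - yp) / 2"
  have m1: "min (yp - min y1 y2) (max y1 y2 - yp) \<le> yp - min y1 y2"
    "min (yp - min y1 y2) (max y1 y2 - yp) \<le> max y1 y2 - yp"
    "min (yp - min y1 y2) (max y1 y2 - yp) > 0" using pp by auto
  have eta: "\<eta> > 0" "min y1 y2 < yp - \<eta>" "yp + \<eta> < max y1 y2" using m1 unfolding \<eta>_def by linarith+
  obtain \<delta> where d: "\<delta> > 0" "\<forall>x y. \<bar>x - a\<bar> < \<delta> \<longrightarrow> yp - \<eta> \<le> y \<longrightarrow> y \<le> yp + \<eta> \<longrightarrow> x \<noteq> a \<longrightarrow> (x, y) \<notin> BB"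
    using vrect[OF ij(1,2) eta(2) _ eta(3)] eta by auto
  define s where "s = min \<delta> \<eta> / 2"
  have s: "0 < s" "s < \<delta>" "s < \<eta>" using d eta by (auto simp: s_def)
  have line: "\<forall>x. x \<noteq> a \<and> \<bar>x - a\<bar> < \<delta> \<longrightarrow> (x, yp) \<notin> BB" using d eta by auto
  have so: "SO vs (-1) (a, yp)"
  proof -
    obtain e where e: "e > 0" "\<forall>t. 0 < t \<and> t < e \<longrightarrow> p - (t, 0) \<notin> RR"
      using lo p unfolding left_outside_def by blast
    show ?thesis unfolding SO_def
    proof (intro exI[of _ e] conjI allI impI)
      fix t assume "0 < t \<and> t < e"
      then have "p - (t, 0) \<notin> RR" using e by blast
      then show "(a, yp) + (- 1 * t, 0) \<notin> RR" using pp by simp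
    qed (use e in auto)
  qed
  have "(a + (-1) * s, yp) \<in> OUT" using SO_char[OF line _ s(1,2), of "-1"] so by simp
  then have sout: "(a - s, yp) \<in> OUT" by simp
  define RL where "RL = rectS a \<delta> (-1) (yp - \<eta>) (yp + \<eta>)"
  have cRL: "connected RL" "RL \<inter> BB = {}" unfolding RL_def using rectS_conn rectS_BB[OF d(2) _ d(1)] by auto
  have P: "(a - s, yp) \<in> RL" unfolding RL_def using rectS_mem[of "-1" \<delta>] s eta by auto
  show ?thesis
  proof (intro exI[of _ "min \<delta> \<eta>"] conjI ballI impI)
    fix z assume z: "z \<in> RR" "dist z p < min \<delta> \<eta>"
    have "\<bar>fst z - a\<bar> \<le> dist z p" "\<bar>snd z - yp\<bar> \<le> dist z p"
      using dist_fst_le[of z p] dist_snd_le[of z p] pp by simp_all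
    then have h: "\<bar>fst z - a\<bar> < \<delta>" "\<bar>snd z - yp\<bar> < \<eta>" using z(2) by linarith+
    show "fst p \<le> fst z"
    proof (rule ccontr)
      assume "\<not> fst p \<le> fst z"
      then have lt: "fst z < a" using pp by simp
      obtain zx zy where zz: "z = (zx, zy)" by (cases z)
      have "0 < -1 * (zx - a)" "-1 * (zx - a) < \<delta>" "yp - \<eta> \<le> zy" "zy \<le> yp + \<eta>"
        using h lt zz by auto
      then have "z \<in> RL" unfolding RL_def zz using rectS_mem[of "-1" \<delta> zx zy] d(1) by simp
      then have "z \<in> OUT" using side_out[OF cRL P _ sout] by blast
      then show False using z(1) OUT_notRR by blast
    qed
  qed (use d eta in auto)
qed

lemma convex_at_min:
  assumes mn: "\<forall>z\<in>RR. fst (pv j) \<le> fst z"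
  shows "convex_vertex vs j"
proof -
  obtain a b \<alpha> \<beta> where c: "corner j a b \<alpha> \<beta>" using corner_exists by blast
  have c': "pv j = (a, b)" "\<alpha> \<noteq> 0" "\<beta> \<noteq> 0" using c by (auto simp: corner_def)
  have mn': "\<forall>z\<in>RR. a \<le> fst z" using mn c' by simp
  have pH: "(a + \<beta>, b) \<in> BB" using c unfolding corner_def by (metis pv_in_BB)
  have "a \<le> a + \<beta>" using mn' BB_RR[OF pH] by auto
  then have bpos: "\<beta> > 0" using c'(3) by simp
  obtain r where r: "r > 0" "r \<le> \<bar>\<alpha>\<bar>" "r \<le> \<bar>\<beta>\<bar>"
    "\<forall>z. dist z (a, b) < r \<longrightarrow> (z \<in> BB \<longleftrightarrow> (fst z = a \<and> 0 \<le> \<alpha> * (snd z - b)) \<or> (snd z = b \<and> 0 \<le> \<beta> * (fst z - a)))"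
    using corner_near[OF c] by blast
  define H1 where "H1 = {z. \<alpha> * (snd z - b) < 0} \<inter> ball (a, b) r"
  have cH1: "connected H1" unfolding H1_def
    by (intro convex_connected convex_Int conv_snd_lt convex_ball)
  have H1B: "H1 \<inter> BB = {}"
  proof -
    have "z \<notin> BB" if "z \<in> H1" for z
    proof -
      have d: "dist z (a, b) < r" and n: "\<alpha> * (snd z - b) < 0" using that by (auto simp: H1_def dist_commute)
      have "z \<in> BB \<longleftrightarrow> (fst z = a \<and> 0 \<le> \<alpha> * (snd z - b)) \<or> (snd z = b \<and> 0 \<le> \<beta> * (fst z - a))"
        using r(4) d by blast
      then show ?thesis using n by auto
    qed
    then show ?thesis by blast
  qed
  define yq where "yq = (if \<alpha> > 0 then b - r / 4 else b + r / 4)"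
  have yq: "\<alpha> * (yq - b) < 0" "\<bar>yq - b\<bar> = r / 4" using c'(2) r(1)
    by (auto simp: yq_def mult_pos_neg mult_neg_pos)
  define q0 where "q0 = (a - r / 4, yq)"
  have "dist q0 (a, b) \<le> \<bar>a - r / 4 - a\<bar> + \<bar>yq - b\<bar>" unfolding q0_def by (rule dist_pair_le)
  then have "dist q0 (a, b) < r" using yq r(1) by simp
  then have q0H: "q0 \<in> H1" unfolding H1_def q0_def using yq by (simp add: dist_commute)
  have "q0 \<notin> RR" using mn' r(1) unfolding q0_def by force
  then have q0out: "q0 \<in> OUT" by (rule notRR_OUT)
  have H1out: "H1 \<subseteq> OUT" using side_out[OF cH1 H1B q0H _ q0out] by blast
  define Qo where "Qo = {z. 0 < \<alpha> * (snd z - b)} \<inter> {z. 0 < \<beta> * (fst z - a)} \<inter> ball (a, b) r"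
  have cQo: "connected Qo" unfolding Qo_def
    by (intro convex_connected convex_Int conv_snd_gt conv_fst_gt convex_ball)
  have QoB: "Qo \<inter> BB = {}"
  proof -
    have "z \<notin> BB" if "z \<in> Qo" for z
    proof -
      have d: "dist z (a, b) < r" and n: "0 < \<alpha> * (snd z - b)" "0 < \<beta> * (fst z - a)"
        using that by (auto simp: Qo_def dist_commute)
      have "z \<in> BB \<longleftrightarrow> (fst z = a \<and> 0 \<le> \<alpha> * (snd z - b)) \<or> (snd z = b \<and> 0 \<le> \<beta> * (fst z - a))"
        using r(4) d by blast
      then show ?thesis using n by auto
    qed
    then show ?thesis by blast
  qed
  have "(a, b) \<in> closure INS" using jordan_close(1)[OF pv_in_BB[of j]] c'(1) by simp
  then have "\<forall>e>0. \<exists>y\<in>INS. dist y (a, b) < e" by (simp add: closure_approachable)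
  then obtain z0 where z0: "z0 \<in> INS" "dist z0 (a, b) < r" using r(1) by blast
  have z0B: "z0 \<notin> BB" using z0(1) INS_notBB by blast
  have fz0: "fst z0 > a"
  proof -
    have ge: "a \<le> fst z0" using mn' INS_RR[OF z0(1)] by blast
    have "fst z0 \<noteq> a"
    proof
      assume fa: "fst z0 = a"
      have "open INS" by (rule open_inside[OF closed_BB])
      then obtain \<epsilon> where \<epsilon>: "\<epsilon> > 0" "ball z0 \<epsilon> \<subseteq> INS" using z0(1) open_contains_ball by blast
      have "dist z0 (z0 - (\<epsilon> / 2, 0)) < \<epsilon>" using \<epsilon>(1) by (simp add: dist_norm)
      then have "z0 - (\<epsilon> / 2, 0) \<in> INS" using \<epsilon>(2) by auto
      then have "a \<le> fst (z0 - (\<epsilon> / 2, 0))" using mn' INS_RR by blast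
      then show False using fa \<epsilon>(1) by simp
    qed
    then show ?thesis using ge by simp
  qed
  have az0: "0 < \<alpha> * (snd z0 - b)"
  proof -
    have "\<not> \<alpha> * (snd z0 - b) < 0"
    proof
      assume "\<alpha> * (snd z0 - b) < 0"
      then have "z0 \<in> H1" unfolding H1_def using z0(2) by (simp add: dist_commute)
      then show False using H1out z0(1) INS_notOUT by blast
    qed
    moreover have "\<alpha> * (snd z0 - b) \<noteq> 0"
    proof
      assume "\<alpha> * (snd z0 - b) = 0"
      then have "snd z0 = b" using c'(2) by simp
      moreover have "0 \<le> \<beta> * (fst z0 - a)" using bpos fz0 by simp
      ultimately have "z0 \<in> BB" using r(4) z0(2) by blast
      then show False using z0B by blast
    qed
    ultimately show ?thesis by linarith
  qed
  have "z0 \<in> Qo" unfolding Qo_def using az0 bpos fz0 z0(2) by (simp add: dist_commute)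
  then have QoIN: "Qo \<subseteq> INS" using side_in[OF cQo QoB _ _ z0(1)] by blast
  have "RR \<inter> ball (a, b) r = Qd (a, b) \<alpha> \<beta> \<inter> ball (a, b) r"
  proof (intro set_eqI iffI)
    fix z assume z: "z \<in> RR \<inter> ball (a, b) r"
    have "0 \<le> \<beta> * (fst z - a)" using mn' z bpos by simp
    moreover have "0 \<le> \<alpha> * (snd z - b)"
    proof (rule ccontr)
      assume "\<not> 0 \<le> \<alpha> * (snd z - b)"
      then have "z \<in> H1" unfolding H1_def using z by simp
      then show False using H1out z OUT_notRR by blast
    qed
    ultimately show "z \<in> Qd (a, b) \<alpha> \<beta> \<inter> ball (a, b) r" unfolding Qd_def using z by simp
  next
    fix z assume z: "z \<in> Qd (a, b) \<alpha> \<beta> \<inter> ball (a, b) r"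
    then have q: "0 \<le> \<alpha> * (snd z - b)" "0 \<le> \<beta> * (fst z - a)" "dist z (a, b) < r"
      unfolding Qd_def by (auto simp: dist_commute)
    show "z \<in> RR \<inter> ball (a, b) r"
    proof (cases "fst z = a \<or> snd z = b")
      case True
      then have "z \<in> BB" using r(4) q by blast
      then show ?thesis using z BB_RR by blast
    next
      case False
      then have "\<alpha> * (snd z - b) \<noteq> 0" "\<beta> * (fst z - a) \<noteq> 0" using c' by auto
      then have "0 < \<alpha> * (snd z - b)" "0 < \<beta> * (fst z - a)" using q by linarith+
      then have "z \<in> Qo" unfolding Qo_def using q by (simp add: dist_commute)
      then show ?thesis using QoIN INS_RR z by blast
    qed
  qed
  then show ?thesis using convex_corner[OF c] r(1) by blast
qed

end


lemma open_fst_lt: "open {z::pt. fst z < a}"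
  by (rule open_Collect_less) (auto intro: continuous_intros)
lemma closed_fst_le: "closed {z::pt. fst z \<le> a}"
  by (rule closed_Collect_le) (auto intro: continuous_intros)
lemma conv_fst_ge: "convex {z::pt. m \<le> fst z}"
proof -
  have "{z::pt. m \<le> fst z} = {z. inner (1, 0) z \<ge> m}" by (auto simp: inner_prod_def)
  then show ?thesis using convex_halfspace_ge by metis
qed
lemma conv_fst_lt: "convex {z::pt. fst z < m}"
proof -
  have "{z::pt. fst z < m} = {z. inner (1, 0) z < m}" by (auto simp: inner_prod_def)
  then show ?thesis using convex_halfspace_lt by metis
qed

context opoly begin
lemma V_mod[simp]: "vertical_edge vs (i mod length vs) \<longleftrightarrow> vertical_edge vs i"
  by (simp add: vertical_edge_def)
lemma H_mod[simp]: "horizontal_edge vs (i mod length vs) \<longleftrightarrow> horizontal_edge vs i"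
  by (simp add: horizontal_edge_def)
end

locale ocpoly = opoly +
  assumes conn: "connected (poly_region vs)"
    and vsl: "\<forall>c. single_segment ({p. fst p = c} \<inter> poly_region vs)"
begin

lemma lk_local:
  assumes lk: "left_knob vs k" and y: "y \<in> E k"
  shows "\<exists>e>0. \<forall>z\<in>RR. dist z y < e \<longrightarrow> fst (pv k) \<le> fst z"
proof -
  have V: "vertical_edge vs k" "left_outside vs k" "convex_vertex vs k" "convex_vertex vs (Suc k)"
    using lk by (auto simp: left_knob_def knob_def)
  obtain a y1 y2 where ij: "pv k = (a, y1)" "pv (Suc k) = (a, y2)" "y1 \<noteq> y2" using vedge[OF V(1)] by blast
  have fy: "fst y = a" using y E_vert[OF ij(1,2)] by auto
  show ?thesis
  proof (cases "y \<in> open_segment (pv k) (pv (Suc k))")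
    case True
    from lk_interior[OF V(1,2) True] show ?thesis using fy ij by simp
  next
    case False
    then have "y = pv k \<or> y = pv (Suc k)" using y by (auto simp: E_def' open_segment_def)
    then show ?thesis
    proof
      assume yk: "y = pv k"
      obtain a' b \<alpha> \<beta> where c: "corner k a' b \<alpha> \<beta>" using corner_exists by blast
      have "pv k = (a', b)" using c by (simp add: corner_def)
      moreover from lk_end[OF V(1,2) _ V(3) c] obtain e where
        "e > 0" "\<forall>z\<in>RR. dist z (a', b) < e \<longrightarrow> a' \<le> fst z \<and> 0 \<le> \<alpha> * (snd z - b)" by auto
      ultimately show ?thesis using yk by auto
    next
      assume yk: "y = pv (Suc k)"
      obtain a' b \<alpha> \<beta> where c: "corner (Suc k) a' b \<alpha> \<beta>" using corner_exists by blast
      have "pv (Suc k) = (a', b)" using c by (simp add: corner_def)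
      moreover from lk_end[OF V(1,2) _ V(4) c] obtain e where
        "e > 0" "\<forall>z\<in>RR. dist z (a', b) < e \<longrightarrow> a' \<le> fst z \<and> 0 \<le> \<alpha> * (snd z - b)" by auto
      ultimately show ?thesis using yk ij by auto
    qed
  qed
qed

lemma lk_slice:
  assumes lk: "left_knob vs k"
  shows "{p. fst p = fst (pv k)} \<inter> RR \<subseteq> E k"
proof
  fix z assume z: "z \<in> {p. fst p = fst (pv k)} \<inter> RR"
  define S where "S = {p. fst p = fst (pv k)} \<inter> RR"
  have cS: "convex S"
  proof -
    have "S = {} \<or> (\<exists>a b. S = closed_segment a b)" using vsl unfolding S_def single_segment_def by blast
    then show ?thesis by auto
  qed
  have V: "vertical_edge vs k" "left_outside vs k" "convex_vertex vs k" "convex_vertex vs (Suc k)"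
    using lk by (auto simp: left_knob_def knob_def)
  obtain a y1 y2 where ij: "pv k = (a, y1)" "pv (Suc k) = (a, y2)" "y1 \<noteq> y2" using vedge[OF V(1)] by blast
  have zS: "z \<in> S" using z by (simp add: S_def)
  have fz: "fst z = a" using z ij by simp
  have endc: "0 \<le> (ob - b') * (snd z - b')"
    if jk: "j = k \<or> j = Suc k" and pj: "pv j = (a, b')" and po: "(if j = k then pv (Suc k) else pv k) = (a, ob)"
    for j b' ob
  proof (rule ccontr)
    assume neg: "\<not> 0 \<le> (ob - b') * (snd z - b')"
    obtain a0 b0 \<alpha> \<beta> where c: "corner j a0 b0 \<alpha> \<beta>" using corner_exists by blast
    have ab0: "a0 = a" "b0 = b'" using c pj by (auto simp: corner_def)
    have "(a, ob) = (a0, b0 + \<alpha>)" using other_end[OF V(1) jk c] po by simp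
    then have al: "\<alpha> = ob - b'" using ab0 by simp
    have cv: "convex_vertex vs j" using jk V by auto
    obtain e where e: "e > 0" "\<forall>w\<in>RR. dist w (a, b') < e \<longrightarrow> 0 \<le> \<alpha> * (snd w - b')"
      using lk_end[OF V(1,2) jk cv c] ab0 by auto
    define lam where "lam = min 1 (e / (2 * (\<bar>snd z - b'\<bar> + 1)))"
    have "0 < e / (2 * (\<bar>snd z - b'\<bar> + 1))" using e(1) by (intro divide_pos_pos) (auto intro: add_nonneg_pos)
    then have lam: "0 < lam" "lam \<le> 1" by (auto simp: lam_def)
    have "lam \<le> e / (2 * (\<bar>snd z - b'\<bar> + 1))" by (simp add: lam_def)
    then have "lam * (\<bar>snd z - b'\<bar> + 1) \<le> e / (2 * (\<bar>snd z - b'\<bar> + 1)) * (\<bar>snd z - b'\<bar> + 1)"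
      by (rule mult_right_mono) simp
    moreover have "e / (2 * (\<bar>snd z - b'\<bar> + 1)) * (\<bar>snd z - b'\<bar> + 1) = e / 2"
    proof -
      have "0 \<le> \<bar>snd z - b'\<bar>" by simp
      then have "0 < \<bar>snd z - b'\<bar> + 1" by linarith
      then show ?thesis by (simp add: field_simps)
    qed
    ultimately have "lam * (\<bar>snd z - b'\<bar> + 1) \<le> e / 2" by linarith
    then have lz: "lam * \<bar>snd z - b'\<bar> < e" using lam e by (simp add: algebra_simps)
    define w where "w = (a, b' + lam * (snd z - b'))"
    have "w = (1 - lam) *\<^sub>R (a, b') + lam *\<^sub>R z" using fz by (simp add: w_def prod_eq_iff algebra_simps)
    then have "w \<in> closed_segment (a, b') z" using lam unfolding in_segment(1)
      by (intro exI[of _ lam]) simp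
    moreover have "(a, b') \<in> S" unfolding S_def using pj[symmetric] BB_RR[OF pv_in_BB[of j]] ij jk V(1)
      by (auto simp: vertical_edge_def)
    ultimately have "w \<in> S" using closed_segment_subset[OF _ zS cS] by blast
    then have wR: "w \<in> RR" by (simp add: S_def)
    have "dist w (a, b') = \<bar>lam * (snd z - b')\<bar>" by (simp add: w_def dist_Pair_Pair dist_real_def)
    also have "\<dots> = lam * \<bar>snd z - b'\<bar>" using lam by (simp add: abs_mult)
    finally have "dist w (a, b') < e" using lz by simp
    then have "0 \<le> \<alpha> * (snd w - b')" using e wR by blast
    moreover have "\<alpha> * (snd w - b') = lam * ((ob - b') * (snd z - b'))" by (simp add: w_def al algebra_simps)
    moreover have "lam * ((ob - b') * (snd z - b')) < 0" using lam neg by (simp add: mult_pos_neg)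
    ultimately show False by linarith
  qed
  have e1: "0 \<le> (y2 - y1) * (snd z - y1)" using endc[of k y1 y2] ij by simp
  have e2: "0 \<le> (y1 - y2) * (snd z - y2)" using endc[of "Suc k" y2 y1] ij by simp
  have "min y1 y2 \<le> snd z \<and> snd z \<le> max y1 y2"
  proof (cases "y1 < y2")
    case True
    then have "0 \<le> snd z - y1" "snd z - y2 \<le> 0" using e1 e2 by (auto simp: zero_le_mult_iff)
    then show ?thesis using True by simp
  next
    case False
    then have "y2 < y1" using ij(3) by simp
    then have "snd z - y1 \<le> 0" "0 \<le> snd z - y2" using e1 e2 by (auto simp: zero_le_mult_iff)
    then show ?thesis using \<open>y2 < y1\<close> by simp
  qed
  then show "z \<in> E k" using E_vert[OF ij(1,2)] fz by simp
qed

lemma lk_half: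
  assumes lk: "left_knob vs k"
  shows "\<forall>z\<in>RR. fst (pv k) \<le> fst z"
proof (rule ccontr)
  assume "\<not> (\<forall>z\<in>RR. fst (pv k) \<le> fst z)"
  then obtain q where q: "q \<in> RR" "fst q < fst (pv k)" by force
  define a where "a = fst (pv k)"
  define A where "A = RR \<inter> {z. fst z < a}"
  have ncl: "y \<notin> closure A" if yE: "y \<in> E k" for y
  proof
    assume "y \<in> closure A"
    then have ap: "\<forall>e>0. \<exists>w\<in>A. dist w y < e" by (simp add: closure_approachable)
    obtain e where e: "e > 0" "\<forall>z\<in>RR. dist z y < e \<longrightarrow> a \<le> fst z" using lk_local[OF lk yE] a_def by blast
    from ap e(1) obtain w where "w \<in> A" "dist w y < e" by blast
    then show False using e(2) by (auto simp: A_def)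
  qed
  have clA: "closure A \<subseteq> {z. fst z \<le> a}"
    by (rule closure_minimal) (auto simp: A_def closed_fst_le)
  have "{z. fst z < a} \<inter> RR = {} \<or> (- closure A) \<inter> RR = {}"
  proof (rule connectedD[OF conn open_fst_lt open_Compl[OF closed_closure]])
    show "{z. fst z < a} \<inter> - closure A \<inter> RR = {}"
      using closure_subset[of A] by (auto simp: A_def)
    show "RR \<subseteq> {z. fst z < a} \<union> - closure A"
    proof
      fix z assume zR: "z \<in> RR"
      show "z \<in> {z. fst z < a} \<union> - closure A"
      proof (rule ccontr)
        assume "z \<notin> {z. fst z < a} \<union> - closure A"
        then have "a \<le> fst z" "z \<in> closure A" by auto
        then have "fst z = a" using clA by auto
        then have "z \<in> E k" using lk_slice[OF lk] zR a_def by blast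
        then show False using ncl \<open>z \<in> closure A\<close> by blast
      qed
    qed
  qed
  moreover have "q \<in> {z. fst z < a} \<inter> RR" using q a_def by simp
  moreover have "pv k \<in> (- closure A) \<inter> RR"
    using ncl[of "pv k"] BB_RR[OF pv_in_BB[of k]] by (auto simp: E_def')
  ultimately show False by blast
qed

lemma lk_unique:
  assumes "left_knob vs k1" "left_knob vs k2" "k1 < length vs" "k2 < length vs"
  shows "k1 = k2"
proof (rule ccontr)
  assume ne: "k1 \<noteq> k2"
  have "fst (pv k1) \<le> fst (pv k2)" using lk_half[OF assms(1)] BB_RR[OF pv_in_BB[of k2]] by blast
  moreover have "fst (pv k2) \<le> fst (pv k1)" using lk_half[OF assms(2)] BB_RR[OF pv_in_BB[of k1]] by blast
  ultimately have eqa: "fst (pv k1) = fst (pv k2)" by simp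
  have V2: "vertical_edge vs k2" using assms(2) by (simp add: left_knob_def)
  obtain a y1 y2 where ij: "pv k2 = (a, y1)" "pv (Suc k2) = (a, y2)" "y1 \<noteq> y2" using vedge[OF V2] by blast
  have "E k2 \<subseteq> {p. fst p = fst (pv k1)} \<inter> RR"
    using E_vert[OF ij(1,2)] eqa ij E_sub_BB[of k2] BB_RR by auto
  then have sub: "E k2 \<subseteq> E k1" using lk_slice[OF assms(1)] by blast
  have inE: "pv k2 \<in> E k1 \<inter> E k2" "pv (Suc k2) \<in> E k1 \<inter> E k2" using sub by (auto simp: E_def')
  have "k1 mod length vs \<noteq> k2 mod length vs" using ne assms(3,4) by simp
  from edge_int[OF this] inE have "pv k2 = pv (Suc k2)" by (auto split: if_splits)
  then show False using pv_Suc_ne[of k2] by simp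
qed

lemma lk_exists: "\<exists>k<length vs. left_knob vs k"
proof -
  define m where "m = Min (fst ` set vs)"
  have fin: "finite (fst ` set vs)" "fst ` set vs \<noteq> {}" using npos by auto
  have "m \<in> fst ` set vs" using Min_in[OF fin] m_def by simp
  then obtain x where x: "x \<in> set vs" "fst x = m" by auto
  then obtain j where j: "j < length vs" "vs ! j = x" by (auto simp: in_set_conv_nth)
  have pj: "fst (pv j) = m" using j x by (simp add: vtx_def)
  have mle: "m \<le> fst (pv i)" for i
  proof -
    have "pv i \<in> set vs" using npos by (simp add: vtx_def)
    then show ?thesis unfolding m_def using fin by simp
  qed
  have BBm: "\<forall>z\<in>BB. m \<le> fst z"
  proof
    fix z assume "z \<in> BB"
    then obtain i where "z \<in> E i" by (auto simp: BB_def')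
    moreover have "E i \<subseteq> {z. m \<le> fst z}" unfolding E_def'
      by (rule closed_segment_subset) (use mle conv_fst_ge in auto)
    ultimately show "m \<le> fst z" by auto
  qed
  have RRm: "\<forall>z\<in>RR. m \<le> fst z"
  proof
    fix z assume "z \<in> RR"
    then have "z \<in> BB \<or> z \<in> INS" by (simp add: RR_def')
    then show "m \<le> fst z"
    proof
      assume "z \<in> BB" then show ?thesis using BBm by blast
    next
      assume zi: "z \<in> INS"
      show "m \<le> fst z"
      proof (rule ccontr)
        assume "\<not> m \<le> fst z"
        define H where "H = {w::pt. fst w < m}"
        have cH: "connected H" unfolding H_def by (rule convex_connected[OF conv_fst_lt])
        have HB: "H \<subseteq> - BB" using BBm unfolding H_def by force
        have zH: "z \<in> H" using \<open>\<not> m \<le> fst z\<close> by (simp add: H_def)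
        have sub: "H \<subseteq> connected_component_set (- BB) z"
          by (rule connected_component_maximal[OF zH cH HB])
        have "\<not> bounded H"
        proof
          assume "bounded H"
          then obtain B where B: "\<forall>x\<in>H. norm x \<le> B" by (auto simp: bounded_iff)
          define x0 where "x0 = min (m - 1) (- \<bar>B\<bar> - 1)"
          have "(x0, 0::real) \<in> H" by (simp add: H_def x0_def)
          then have "norm (x0, 0::real) \<le> B" using B by blast
          moreover have "norm x0 \<le> norm (x0, 0::real)" by (rule norm_fst_le)
          moreover have "\<bar>B\<bar> + 1 \<le> \<bar>x0\<bar>" by (simp add: x0_def)
          ultimately show False by simp
        qed
        then have "\<not> bounded (connected_component_set (- BB) z)" using sub bounded_subset by blast
        then show False using zi by (simp add: inside_def)
      qed
    qed
  qed
  obtain k where k: "k < length vs" "vertical_edge vs k" "fst (pv k) = m" "fst (pv (Suc k)) = m"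
  proof (cases "vertical_edge vs j")
    case True
    show ?thesis
    proof (rule that[of j])
      show "j < length vs" by (rule j(1))
      show "vertical_edge vs j" by (rule True)
      show "fst (pv j) = m" by (rule pj)
      show "fst (pv (Suc j)) = m" using True pj by (simp add: vertical_edge_def)
    qed
  next
    case False
    then have "horizontal_edge vs j" using VH by blast
    moreover have "horizontal_edge vs (Suc (j + length vs - 1)) = horizontal_edge vs j"
      using H_add[of j] Suc_prev[of j] by simp
    ultimately have V: "vertical_edge vs (j + length vs - 1)" using V_H_Suc[of "j + length vs - 1"] by simp
    have f1: "fst (pv (Suc (j + length vs - 1))) = m" using pj by simp
    have f2: "fst (pv (j + length vs - 1)) = m" using V f1 by (simp add: vertical_edge_def)
    define k' where "k' = (j + length vs - 1) mod length vs"
    have "k' < length vs" unfolding k'_def using npos by simp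
    moreover have "vertical_edge vs k'" unfolding k'_def using V by (simp only: V_mod)
    moreover have "fst (pv k') = m" unfolding k'_def using f2 by (simp only: pv_mod)
    moreover have "fst (pv (Suc k')) = m" unfolding k'_def using f1 by (simp only: pv_Suc_mod)
    ultimately show ?thesis by (rule that)
  qed
  have lk: "left_knob vs k" unfolding left_knob_def knob_def
  proof (intro conjI)
    have "\<forall>z\<in>RR. fst (pv k) \<le> fst z" using RRm k(3) by simp
    then show "convex_vertex vs k" by (rule convex_at_min)
    have "\<forall>z\<in>RR. fst (pv (Suc k)) \<le> fst z" using RRm k(4) by simp
    then show "convex_vertex vs (Suc k)" by (rule convex_at_min)
    show "vertical_edge vs k" by (rule k(2))
    show "left_outside vs k" unfolding left_outside_def
    proof (intro ballI exI[of _ 1] conjI allI impI)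
      fix p and t :: real assume p: "p \<in> open_segment (pv k) (pv (Suc k))" and t: "0 < t \<and> t < 1"
      obtain a y1 y2 where ij: "pv k = (a, y1)" "pv (Suc k) = (a, y2)" "y1 \<noteq> y2" using vedge[OF k(2)] by blast
      have "p \<in> E k" using p by (auto simp: E_def' open_segment_def)
      then have "fst p = m" using E_vert[OF ij(1,2)] k(3) ij by simp
      show "p - (t, 0) \<notin> RR"
      proof
        assume "p - (t, 0) \<in> RR"
        then have "m \<le> fst (p - (t, 0))" using RRm by blast
        then show False using \<open>fst p = m\<close> t by simp
      qed
    qed simp
  qed
  then show ?thesis using k(1) by blast
qed

lemma lk_card: "card {i. i < length vs \<and> left_knob vs i} = 1"
proof -
  obtain k where k: "k < length vs" "left_knob vs k" using lk_exists by blast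
  have "{i. i < length vs \<and> left_knob vs i} = {k}" using k lk_unique by blast
  then show ?thesis by simp
qed

end


definition RO :: "pt list \<Rightarrow> nat \<Rightarrow> bool" where
  "RO vs i \<longleftrightarrow> (\<forall>p\<in>open_segment (vtx vs i) (vtx vs (Suc i)). \<exists>e>0. \<forall>t. 0 < t \<and> t < e \<longrightarrow>
        p + (t, 0) \<notin> poly_region vs)"

lemma SO_alt: "SO vs \<sigma> p \<longleftrightarrow> (\<exists>e>0. \<forall>t. 0 < t \<and> t < e \<longrightarrow> p + (\<sigma> * t, 0) \<notin> poly_region vs)"
  by (simp add: SO_def)

context opoly begin

lemma SO_seg:
  assumes ij: "pv i = (a, y1)" "pv (Suc i) = (a, y2)"
  shows "(\<forall>p\<in>open_segment (pv i) (pv (Suc i)). SO vs \<sigma> p) \<longleftrightarrow>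
         (\<forall>yp. min y1 y2 < yp \<and> yp < max y1 y2 \<longrightarrow> SO vs \<sigma> (a, yp))"
proof
  assume h: "\<forall>p\<in>open_segment (pv i) (pv (Suc i)). SO vs \<sigma> p"
  show "\<forall>yp. min y1 y2 < yp \<and> yp < max y1 y2 \<longrightarrow> SO vs \<sigma> (a, yp)"
  proof (intro allI impI)
    fix yp assume "min y1 y2 < yp \<and> yp < max y1 y2"
    then have "(a, yp) \<in> open_segment (pv i) (pv (Suc i))" using oseg_E_vert[OF ij] by simp
    then show "SO vs \<sigma> (a, yp)" using h by blast
  qed
next
  assume h: "\<forall>yp. min y1 y2 < yp \<and> yp < max y1 y2 \<longrightarrow> SO vs \<sigma> (a, yp)"
  show "\<forall>p\<in>open_segment (pv i) (pv (Suc i)). SO vs \<sigma> p"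
  proof
    fix p assume "p \<in> open_segment (pv i) (pv (Suc i))"
    then have "fst p = a" "min y1 y2 < snd p" "snd p < max y1 y2" using oseg_E_vert[OF ij] by auto
    then have "SO vs \<sigma> (a, snd p)" using h by blast
    then show "SO vs \<sigma> p" using \<open>fst p = a\<close> by (metis prod.collapse)
  qed
qed

lemma lo_SO: "left_outside vs i \<longleftrightarrow> (\<forall>p\<in>open_segment (pv i) (pv (Suc i)). SO vs (-1) p)"
proof -
  have eq: "p + (- t, 0) = p - (t, 0)" for p :: pt and t :: real by (simp add: prod_eq_iff)
  show ?thesis unfolding left_outside_def SO_def by (simp add: eq)
qed

lemma ro_SO: "RO vs i \<longleftrightarrow> (\<forall>p\<in>open_segment (pv i) (pv (Suc i)). SO vs 1 p)"
  unfolding RO_def SO_def by simp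

lemma side_lemma:
  assumes V: "vertical_edge vs i"
  shows "\<not> left_outside vs i \<longleftrightarrow> RO vs i"
proof -
  obtain a y1 y2 where ij: "pv i = (a, y1)" "pv (Suc i) = (a, y2)" "y1 \<noteq> y2" using vedge[OF V] by blast
  define y0 where "y0 = (y1 + y2) / 2"
  have y0: "min y1 y2 < y0 \<and> y0 < max y1 y2"
  proof (cases "y1 < y2")
    case True
    then have "min y1 y2 = y1" "max y1 y2 = y2" by simp_all
    then show ?thesis using True unfolding y0_def by simp
  next
    case False
    then have "y2 < y1" using ij(3) by simp
    then have "min y1 y2 = y2" "max y1 y2 = y1" by simp_all
    then show ?thesis using \<open>y2 < y1\<close> unfolding y0_def by simp
  qed
  have y01: "min y1 y2 < y0" and y02: "y0 < max y1 y2" using y0 by simp_all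
  have L: "left_outside vs i \<longleftrightarrow> SO vs (-1) (a, y0)"
  proof -
    have "left_outside vs i \<longleftrightarrow> (\<forall>yp. min y1 y2 < yp \<and> yp < max y1 y2 \<longrightarrow> SO vs (-1) (a, yp))"
      using lo_SO SO_seg[OF ij(1,2)] by simp
    also have "\<dots> \<longleftrightarrow> SO vs (-1) (a, y0)"
      using side_const[OF ij(1,2) _ _ y01 y02, of _ "-1"] y01 y02 by blast
    finally show ?thesis .
  qed
  have R: "RO vs i \<longleftrightarrow> SO vs 1 (a, y0)"
  proof -
    have "RO vs i \<longleftrightarrow> (\<forall>yp. min y1 y2 < yp \<and> yp < max y1 y2 \<longrightarrow> SO vs 1 (a, yp))"
      using ro_SO SO_seg[OF ij(1,2)] by simp
    also have "\<dots> \<longleftrightarrow> SO vs 1 (a, y0)"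
      using side_const[OF ij(1,2) _ _ y01 y02, of _ "1"] y01 y02 by blast
    finally show ?thesis .
  qed
  show ?thesis using L R side_dich[OF ij(1,2) y01 y02] by simp
qed

end


definition rot :: "pt \<Rightarrow> pt" where "rot z = (- snd z, fst z)"
definition rinv :: "pt \<Rightarrow> pt" where "rinv z = (snd z, - fst z)"

lemma rot_rinv[simp]: "rot (rinv z) = z" "rinv (rot z) = z" by (simp_all add: rot_def rinv_def)
lemma linear_rot: "linear rot" by (rule linearI) (auto simp: rot_def)
lemma linear_rinv: "linear rinv" by (rule linearI) (auto simp: rinv_def)
lemma bl_rot: "bounded_linear rot" using linear_rot linear_conv_bounded_linear by blast
lemma bl_rinv: "bounded_linear rinv" using linear_rinv linear_conv_bounded_linear by blast
lemma inj_rot: "inj rot" by (metis injI rot_rinv(2))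
lemma cont_rot: "continuous_on A rot" unfolding rot_def by (intro continuous_intros)
lemma cont_rinv: "continuous_on A rinv" unfolding rinv_def by (intro continuous_intros)
lemma rot_mem[simp]: "rot x \<in> rot ` A \<longleftrightarrow> x \<in> A" using inj_rot by (rule inj_image_mem_iff)
lemma rot_img_eq[simp]: "rot ` A = rot ` B \<longleftrightarrow> A = B" using inj_rot by (rule inj_image_eq_iff)
lemma rinv_rot_img[simp]: "rinv ` rot ` A = A" by (force simp: image_iff)
lemma rot_eq_iff[simp]: "rot x = rot y \<longleftrightarrow> x = y" using inj_rot by (simp add: inj_eq)
lemma fst_rot[simp]: "fst (rot z) = - snd z" and snd_rot[simp]: "snd (rot z) = fst z" by (simp_all add: rot_def)
lemma dist_rot[simp]: "dist (rot x) (rot y) = dist x y"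
  by (cases x; cases y) (simp add: rot_def dist_Pair_Pair dist_minus add.commute)
lemma rot_ball: "rot ` ball v e = ball (rot v) e"
proof (intro set_eqI iffI)
  fix z assume "z \<in> rot ` ball v e" then show "z \<in> ball (rot v) e" by auto
next
  fix z assume "z \<in> ball (rot v) e"
  then have "rinv z \<in> ball v e" using dist_rot[of v "rinv z"] by simp
  then show "z \<in> rot ` ball v e" by (metis image_eqI rot_rinv(1))
qed
lemma rot_diff: "rot (x - y) = rot x - rot y" by (simp add: rot_def)
lemma rot_comb: "rot (v + s *\<^sub>R (u - v) + t *\<^sub>R (w - v)) = rot v + s *\<^sub>R (rot u - rot v) + t *\<^sub>R (rot w - rot v)"
  by (simp add: rot_def prod_eq_iff algebra_simps)
lemma rot_inner: "rot x \<bullet> rot y = x \<bullet> y"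
  by (cases x; cases y) (simp add: rot_def)
lemma rot_cseg: "closed_segment (rot a) (rot b) = rot ` closed_segment a b"
  by (rule closed_segment_linear_image[OF linear_rot])
lemma rot_oseg: "open_segment (rot a) (rot b) = rot ` open_segment a b"
  by (rule open_segment_linear_image[OF linear_rot inj_rot])

lemma cc_rot: "connected_component (- S) x y \<Longrightarrow> connected_component (- (rot ` S)) (rot x) (rot y)"
proof -
  assume "connected_component (- S) x y"
  then obtain T where T: "connected T" "T \<subseteq> - S" "x \<in> T" "y \<in> T" by (auto simp: connected_component_def)
  have "connected (rot ` T)" using T(1) cont_rot by (rule connected_continuous_image[rotated])
  moreover have "rot ` T \<subseteq> - (rot ` S)" using T(2) by auto
  ultimately show ?thesis using T(3,4) unfolding connected_component_def by blast
qed

lemma cc_rinv: "connected_component (- S) x y \<Longrightarrow> connected_component (- (rinv ` S)) (rinv x) (rinv y)"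
proof -
  assume "connected_component (- S) x y"
  then obtain T where T: "connected T" "T \<subseteq> - S" "x \<in> T" "y \<in> T" by (auto simp: connected_component_def)
  have "connected (rinv ` T)" using T(1) cont_rinv by (rule connected_continuous_image[rotated])
  moreover have "rinv ` T \<subseteq> - (rinv ` S)" using T(2) by (auto simp: rinv_def)
  ultimately show ?thesis using T(3,4) unfolding connected_component_def by blast
qed

lemma ccs_rot: "connected_component_set (- (rot ` S)) (rot x) = rot ` connected_component_set (- S) x"
proof (intro set_eqI iffI)
  fix z assume "z \<in> connected_component_set (- (rot ` S)) (rot x)"
  then have "connected_component (- (rinv ` rot ` S)) (rinv (rot x)) (rinv z)" by (intro cc_rinv) simp
  then have "rinv z \<in> connected_component_set (- S) x" by simp
  then show "z \<in> rot ` connected_component_set (- S) x" by (metis image_eqI rot_rinv(1))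
next
  fix z assume "z \<in> rot ` connected_component_set (- S) x"
  then obtain y where y: "z = rot y" "connected_component (- S) x y" by auto
  then show "z \<in> connected_component_set (- (rot ` S)) (rot x)" using cc_rot[of S x y] by simp
qed

lemma bounded_rot: "bounded (rot ` A) \<longleftrightarrow> bounded A"
proof
  assume "bounded (rot ` A)"
  then have "bounded (rinv ` rot ` A)" using bl_rinv by (rule bounded_linear_image)
  then show "bounded A" by simp
qed (use bl_rot bounded_linear_image in blast)

lemma inside_rot_pt: "rot x \<in> inside (rot ` S) \<longleftrightarrow> x \<in> inside S"
  by (simp only: inside_def mem_Collect_eq ccs_rot bounded_rot rot_mem)

lemma inside_rot: "inside (rot ` S) = rot ` inside S"
proof (intro set_eqI)
  fix z
  have "z \<in> inside (rot ` S) \<longleftrightarrow> rot (rinv z) \<in> inside (rot ` S)" by simp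
  also have "\<dots> \<longleftrightarrow> rinv z \<in> inside S" by (rule inside_rot_pt)
  also have "\<dots> \<longleftrightarrow> rot (rinv z) \<in> rot ` inside S" by (rule rot_mem[symmetric])
  finally show "z \<in> inside (rot ` S) \<longleftrightarrow> z \<in> rot ` inside S" by simp
qed

lemma vtx_rot: "vs \<noteq> [] \<Longrightarrow> vtx (map rot vs) i = rot (vtx vs i)"
  by (simp add: vtx_def)
lemma edge_rot: "vs \<noteq> [] \<Longrightarrow> edge_set (map rot vs) i = rot ` edge_set vs i"
  by (simp add: edge_set_def vtx_rot rot_cseg)
lemma bd_rot: "vs \<noteq> [] \<Longrightarrow> poly_boundary (map rot vs) = rot ` poly_boundary vs"
  by (simp add: poly_boundary_def edge_rot image_UN)
lemma reg_rot: "vs \<noteq> [] \<Longrightarrow> poly_region (map rot vs) = rot ` poly_region vs"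
  by (simp add: poly_region_def bd_rot inside_rot image_Un)

lemma V_rot: "vs \<noteq> [] \<Longrightarrow> vertical_edge (map rot vs) i \<longleftrightarrow> horizontal_edge vs i"
  by (simp add: vertical_edge_def horizontal_edge_def vtx_rot)
lemma H_rot: "vs \<noteq> [] \<Longrightarrow> horizontal_edge (map rot vs) i \<longleftrightarrow> vertical_edge vs i"
  by (simp add: vertical_edge_def horizontal_edge_def vtx_rot)

lemma cv_rot: "vs \<noteq> [] \<Longrightarrow> convex_vertex (map rot vs) i \<longleftrightarrow> convex_vertex vs i"
proof -
  assume ne: "vs \<noteq> []"
  define v where "v = vtx vs i"
  define u where "u = vtx vs (i + length vs - 1)"
  define w where "w = vtx vs (Suc i)"
  have Q: "{rot v + s *\<^sub>R (rot u - rot v) + t *\<^sub>R (rot w - rot v) | s t. 0 \<le> s \<and> 0 \<le> t} =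
     rot ` {v + s *\<^sub>R (u - v) + t *\<^sub>R (w - v) | s t. 0 \<le> s \<and> 0 \<le> t}"
  proof -
    have "{rot v + s *\<^sub>R (rot u - rot v) + t *\<^sub>R (rot w - rot v) | s t. 0 \<le> s \<and> 0 \<le> t} =
          {rot (v + s *\<^sub>R (u - v) + t *\<^sub>R (w - v)) | s t. 0 \<le> s \<and> 0 \<le> t}"
      by (simp only: rot_comb)
    also have "\<dots> = rot ` {v + s *\<^sub>R (u - v) + t *\<^sub>R (w - v) | s t. 0 \<le> s \<and> 0 \<le> t}" by blast
    finally show ?thesis .
  qed
  have "poly_region (map rot vs) \<inter> ball (rot v) e = rot ` (poly_region vs \<inter> ball v e)" for e
    by (simp add: reg_rot ne rot_ball[symmetric] image_Int[OF inj_rot])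
  moreover have "{rot v + s *\<^sub>R (rot u - rot v) + t *\<^sub>R (rot w - rot v) | s t. 0 \<le> s \<and> 0 \<le> t} \<inter> ball (rot v) e
     = rot ` ({v + s *\<^sub>R (u - v) + t *\<^sub>R (w - v) | s t. 0 \<le> s \<and> 0 \<le> t} \<inter> ball v e)" for e
    by (simp add: Q rot_ball[symmetric] image_Int[OF inj_rot])
  moreover have "(rot u - rot v) \<bullet> (rot w - rot v) = (u - v) \<bullet> (w - v)"
    by (simp add: rot_diff[symmetric] rot_inner)
  ultimately show ?thesis
    unfolding convex_vertex_def Let_def vtx_rot[OF ne] length_map v_def[symmetric] u_def[symmetric] w_def[symmetric]
    by simp
qed

lemma knob_rot: "vs \<noteq> [] \<Longrightarrow> knob (map rot vs) i \<longleftrightarrow> knob vs i"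
  by (simp add: knob_def cv_rot)

lemma lo_rot: "vs \<noteq> [] \<Longrightarrow> left_outside (map rot vs) i \<longleftrightarrow> above_outside vs i"
proof -
  assume ne: "vs \<noteq> []"
  have e: "rot p - (t, 0) = rot (p + (0, t))" for p and t :: real by (simp add: rot_def)
  show ?thesis unfolding left_outside_def above_outside_def vtx_rot[OF ne] rot_oseg reg_rot[OF ne]
    by (simp add: e)
qed

lemma ao_rot: "vs \<noteq> [] \<Longrightarrow> above_outside (map rot vs) i \<longleftrightarrow> RO vs i"
proof -
  assume ne: "vs \<noteq> []"
  have e: "rot p + (0, t) = rot (p + (t, 0))" for p and t :: real by (simp add: rot_def)
  show ?thesis unfolding RO_def above_outside_def vtx_rot[OF ne] rot_oseg reg_rot[OF ne]
    by (simp add: e)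
qed

lemma ss_rot: assumes "single_segment S" shows "single_segment (rot ` S)"
  using assms unfolding single_segment_def
proof (elim disjE exE)
  assume "S = {}" then show "rot ` S = {} \<or> (\<exists>a b. rot ` S = closed_segment a b)" by simp
next
  fix a b assume "S = closed_segment a b"
  then have "rot ` S = closed_segment (rot a) (rot b)" by (simp add: rot_cseg)
  then show "rot ` S = {} \<or> (\<exists>a b. rot ` S = closed_segment a b)" by blast
qed

lemma vslice_rot: "{p. fst p = c} \<inter> rot ` R = rot ` ({q. snd q = - c} \<inter> R)" by force
lemma hslice_rot: "{p. snd p = c} \<inter> rot ` R = rot ` ({q. fst q = c} \<inter> R)" by force

definition OC2 :: "pt list \<Rightarrow> bool" where
  "OC2 vs \<longleftrightarrow> orthogonal_polygon vs \<and> connected (poly_region vs) \<and>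
     (\<forall>c. single_segment ({p. fst p = c} \<inter> poly_region vs)) \<and>
     (\<forall>c. single_segment ({p. snd p = c} \<inter> poly_region vs))"

lemma OC2_ocpoly: "OC2 vs \<Longrightarrow> ocpoly vs"
  unfolding OC2_def ocpoly_def ocpoly_axioms_def opoly_def by blast

lemma op_rot: assumes op: "orthogonal_polygon vs" shows "orthogonal_polygon (map rot vs)"
proof -
  interpret opoly vs using op by (simp add: opoly_def)
  have ne: "vs \<noteq> []" using npos by auto
  have A: "\<forall>i<length vs. fst (pv i) = fst (pv (Suc i)) \<or> snd (pv i) = snd (pv (Suc i))"
    using VH by (auto simp: vertical_edge_def horizontal_edge_def)
  have B: "\<forall>i<length vs. (fst (pv i) = fst (pv (Suc i))) \<longleftrightarrow> (snd (pv (Suc i)) = snd (pv (Suc (Suc i))))"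
    using V_H_Suc by (auto simp: vertical_edge_def horizontal_edge_def)
  have C: "edge_set (map rot vs) i \<inter> edge_set (map rot vs) j =
          (if Suc i mod length vs = j then {vtx (map rot vs) (Suc i)}
           else if Suc j mod length vs = i then {vtx (map rot vs) i} else {})"
    if "i < length vs" "j < length vs" "i \<noteq> j" for i j
  proof -
    have "E i \<inter> E j = (if Suc i mod length vs = j then {pv (Suc i)}
           else if Suc j mod length vs = i then {pv i} else {})"
      using edge_int[of i j] that by simp
    then have "rot ` (E i \<inter> E j) = (if Suc i mod length vs = j then {rot (pv (Suc i))}
           else if Suc j mod length vs = i then {rot (pv i)} else {})" by simp
    then show ?thesis by (simp add: edge_rot[OF ne] vtx_rot[OF ne] image_Int[OF inj_rot])
  qed
  show ?thesis unfolding orthogonal_polygon_def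
  proof (intro conjI allI impI)
    show "4 \<le> length (map rot vs)" using n4 by simp
    show "distinct (map rot vs)" using dist inj_rot by (simp add: distinct_map inj_on_def)
  next
    fix i assume "i < length (map rot vs)"
    then show "fst (vtx (map rot vs) i) = fst (vtx (map rot vs) (Suc i)) \<or>
               snd (vtx (map rot vs) i) = snd (vtx (map rot vs) (Suc i))"
      using A by (auto simp: vtx_rot[OF ne])
  next
    fix i assume "i < length (map rot vs)"
    then show "(snd (vtx (map rot vs) i) = snd (vtx (map rot vs) (Suc i))) =
               (fst (vtx (map rot vs) (Suc i)) = fst (vtx (map rot vs) (Suc (Suc i))))"
      using B by (auto simp: vtx_rot[OF ne])
  next
    fix i j assume "i < length (map rot vs)" "j < length (map rot vs)" "i \<noteq> j"
    then show "edge_set (map rot vs) i \<inter> edge_set (map rot vs) j =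
          (if Suc i mod length (map rot vs) = j then {vtx (map rot vs) (Suc i)}
           else if Suc j mod length (map rot vs) = i then {vtx (map rot vs) i} else {})"
      using C by simp
  qed
qed

lemma OC2_rot: assumes "OC2 vs" shows "OC2 (map rot vs)"
proof -
  have op: "orthogonal_polygon vs" using assms by (simp add: OC2_def)
  then have ne: "vs \<noteq> []" by (auto simp: orthogonal_polygon_def)
  show ?thesis unfolding OC2_def reg_rot[OF ne]
  proof (intro conjI allI)
    show "orthogonal_polygon (map rot vs)" by (rule op_rot[OF op])
    show "connected (rot ` poly_region vs)"
      using assms cont_rot by (auto simp: OC2_def intro: connected_continuous_image)
  next
    fix c show "single_segment ({p. fst p = c} \<inter> rot ` poly_region vs)"
      unfolding vslice_rot using assms by (auto simp: OC2_def intro: ss_rot)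
  next
    fix c show "single_segment ({p. snd p = c} \<inter> rot ` poly_region vs)"
      unfolding hslice_rot using assms by (auto simp: OC2_def intro: ss_rot)
  qed
qed



lemma OC2_of: "orth_convex_polygon vs \<Longrightarrow> OC2 vs"
  unfolding orth_convex_polygon_def OC2_def using simply_connected_imp_connected by blast

lemma OC2_ne: "OC2 W \<Longrightarrow> W \<noteq> []"
  by (auto simp: OC2_def orthogonal_polygon_def)

lemma OC2_opoly: "OC2 W \<Longrightarrow> opoly W"
  by (simp add: OC2_def opoly_def)

lemma left_card: "OC2 W \<Longrightarrow> card {i. i < length W \<and> left_knob W i} = 1"
  using OC2_ocpoly ocpoly.lk_card by blast

lemma right_eq:
  assumes oc: "OC2 W"
  shows "right_knob W i \<longleftrightarrow> left_knob (map rot (map rot W)) i"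
proof -
  have ne: "W \<noteq> []" using OC2_ne[OF oc] .
  have ne2: "map rot W \<noteq> []" using ne by simp
  interpret opoly W using OC2_opoly[OF oc] .
  have k: "knob (map rot (map rot W)) i \<longleftrightarrow> knob W i" using knob_rot[OF ne2] knob_rot[OF ne] by simp
  have v: "vertical_edge (map rot (map rot W)) i \<longleftrightarrow> vertical_edge W i"
    using V_rot[OF ne2] H_rot[OF ne] by simp
  have l: "left_outside (map rot (map rot W)) i \<longleftrightarrow> RO W i"
    using lo_rot[OF ne2] ao_rot[OF ne] by simp
  show ?thesis unfolding right_knob_def left_knob_def k v l using side_lemma by blast
qed

lemma right_card: assumes "OC2 W" shows "card {i. i < length W \<and> right_knob W i} = 1"
proof -
  have "{i. i < length W \<and> right_knob W i} = {i. i < length (map rot (map rot W)) \<and> left_knob (map rot (map rot W)) i}"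
    using right_eq[OF assms] by simp
  then show ?thesis using left_card[OF OC2_rot[OF OC2_rot[OF assms]]] by simp
qed

lemma top_eq: "W \<noteq> [] \<Longrightarrow> top_knob W i \<longleftrightarrow> left_knob (map rot W) i"
  by (simp add: top_knob_def left_knob_def knob_rot V_rot lo_rot)

lemma bottom_eq: "W \<noteq> [] \<Longrightarrow> bottom_knob W i \<longleftrightarrow> right_knob (map rot W) i"
  by (simp add: bottom_knob_def right_knob_def knob_rot V_rot lo_rot)

theorem lemma6p17:
  fixes vs :: "(real \<times> real) list"
  assumes "orth_convex_polygon vs"
  shows "card {i. i < length vs \<and> knob vs i} = 4 \<and>
         card {i. i < length vs \<and> left_knob vs i} = 1 \<and>
         card {i. i < length vs \<and> right_knob vs i} = 1 \<and>
         card {i. i < length vs \<and> top_knob vs i} = 1 \<and>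
         card {i. i < length vs \<and> bottom_knob vs i} = 1"
proof -
  have oc: "OC2 vs" using OC2_of[OF assms] .
  have ne: "vs \<noteq> []" using OC2_ne[OF oc] .
  interpret opoly vs using OC2_opoly[OF oc] .
  define L where "L = {i. i < length vs \<and> left_knob vs i}"
  define R where "R = {i. i < length vs \<and> right_knob vs i}"
  define T where "T = {i. i < length vs \<and> top_knob vs i}"
  define B where "B = {i. i < length vs \<and> bottom_knob vs i}"
  have cL: "card L = 1" unfolding L_def by (rule left_card[OF oc])
  have cR: "card R = 1" unfolding R_def by (rule right_card[OF oc])
  have cT: "card T = 1"
  proof -
    have "T = {i. i < length (map rot vs) \<and> left_knob (map rot vs) i}" unfolding T_def using top_eq[OF ne] by simp
    then show ?thesis using left_card[OF OC2_rot[OF oc]] by simp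
  qed
  have cB: "card B = 1"
  proof -
    have "B = {i. i < length (map rot vs) \<and> right_knob (map rot vs) i}" unfolding B_def using bottom_eq[OF ne] by simp
    then show ?thesis using right_card[OF OC2_rot[OF oc]] by simp
  qed
  have fin: "finite L" "finite R" "finite T" "finite B" unfolding L_def R_def T_def B_def by auto
  have U: "{i. i < length vs \<and> knob vs i} = L \<union> R \<union> T \<union> B"
    unfolding L_def R_def T_def B_def left_knob_def right_knob_def top_knob_def bottom_knob_def
    using VH by blast
  have d1: "L \<inter> R = {}" unfolding L_def R_def left_knob_def right_knob_def by blast
  have d2: "(L \<union> R) \<inter> T = {}" unfolding L_def R_def T_def left_knob_def right_knob_def top_knob_def
    using not_VH by blast
  have d3: "(L \<union> R \<union> T) \<inter> B = {}"
    unfolding L_def R_def T_def B_def left_knob_def right_knob_def top_knob_def bottom_knob_def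
    using not_VH by blast
  have "card (L \<union> R \<union> T \<union> B) = 4"
    using fin cL cR cT cB d1 d2 d3 by (simp add: card_Un_disjoint)
  then show ?thesis using U cL cR cT cB unfolding L_def R_def T_def B_def by simp
qed


end
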